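(* Let $C$ be a set of colours, $\mathrm{val}:C^\omega\to X$ a $C$-valuation such that $X$ is well-founded, and $m\in\mathbb N$. If for every cardinal $\kappa$ there exists a well-monotone $(\kappa,\mathrm{val})$-universal $C$-graph of width $\le m$, then for every cardinal $\kappa$ there also exists a well-monotone $\varepsilon$-separated monotone graph of breadth $\le m$ which is $(\kappa,\mathrm{val}^\varepsilon)$-universal; consequently $\mathrm{val}$ has $\varepsilon$-memory $\le m$.
   Context: For a set $D$ of colours: a $D$-graph $G$ is a set $V(G)$ with edges $E(G)\subseteq V(G)\times D\times V(G)$, written $v\xrightarrow{c}v'$, every vertex having an outgoing edge; a $D$-tree is a $D$-graph with a root $t_0$ such that every vertex has a unique path from $t_0$; cardinality means that of the vertex set. A morphism $\phi:G\to H$ maps vertices so that $v\xrightarrow{c}v'$ implies $\phi(v)\xrightarrow{c}\phi(v')$. A $D$-valuation is $\mathrm{val}:D^\omega\to X$ with $X$ a complete linear order; $\mathrm{val}_G(v)$ is the supremum of values of colour sequences of infinite paths from $v$ in $G$. Let $\varepsilon\notin C$, $C^\varepsilon=C\sqcup\{\varepsilon\}$; for $w\in(C^\varepsilon)^\omega$, $w_C$ is $w$ with $\varepsilon$'s deleted, and $\mathrm{val}^\varepsilon(w)=\mathrm{val}(w_C)$ if $w_C$ is infinite, $\mathrm{val}^\varepsilon(w)=\inf_{w'\in C^\omega}\mathrm{val}(w_Cw')$ otherwise. A game is $(G,V_{\mathrm{Eve}},v_0,\mathrm{val})$; a strategy is $(S,\pi,s_0)$ with $S$ a graph, $\pi:S\to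 G$ a morphism, $\pi(s_0)=v_0$, and for all $v\notin V_{\mathrm{Eve}}$, $v\xrightarrow{c}v'\in E(G)$, $s\in\pi^{-1}(v)$ there is $s'\in\pi^{-1}(v')$ with $s\xrightarrow{c}s'\in E(S)$; its value is $\mathrm{val}_S(s_0)$ and the value of the game is the infimum over strategies. An $\varepsilon$-game is a $C^\varepsilon$-game with valuation $\mathrm{val}^\varepsilon$; an $\varepsilon$-strategy is a strategy with $V(S)\subseteq V(G)\times M$, $\pi(v,m)=v$, and $(v,m)\xrightarrow{\varepsilon}(v',m')\in E(S)\Rightarrow m=m'$; its memory is $|M|$. $\mathrm{val}$ has $\varepsilon$-memory $\le m$ if in every $\varepsilon$-game the value is attained by an $\varepsilon$-strategy of memory $\le m$. A partially ordered graph $(G,\le)$ is monotone if $u\ge v\xrightarrow{c}v'\ge u'$ implies $u\xrightarrow{c}u'\in E(G)$; well-monotone if moreover $\le$ is well-founded; width $\le m$ means no antichain of cardinality $>m$. An $\varepsilon$-separated monotone graph over a set $M$ is a $C^\varepsilon$-graph $G$ such that $v\le v'\iff v'\xrightarrow{\varepsilon}v\in E(G)$ is a partial order making $G$ monotone, with a partition $(V_j)_{j\in M}$ of $V(G)$ such that $\le$ is total on each part and every $\varepsilon$-edge has both ends in the same part; its breadth is $|M|$ and it is well-monotone if the order is well-founded. For a $D$-valuation $\mathrm{val}$ and cardinal $\kappa$, a $D$-graph $G$ is $(\kappa,\mathrm{val})$-universal if every $D$-tree $T$ of cardinality $<\kappa$ with root $t_0$ admits a morphism $\phi:T\to G$ with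 $\mathrm{val}_G(\phi(t_0))\le\mathrm{val}_T(t_0)$. *)

theory Defs
  imports Main "HOL-Library.Infinite_Set"
begin

definition card_lt :: "'a set \<Rightarrow> 'b set \<Rightarrow> bool" where
  "card_lt A B \<longleftrightarrow> (card_of A, card_of B) \<in> ordLess"

definition is_graph :: "'v set \<Rightarrow> ('v \<times> 'd \<times> 'v) set \<Rightarrow> bool" where
  "is_graph V E \<longleftrightarrow> E \<subseteq> V \<times> UNIV \<times> V \<and> (\<forall>v\<in>V. \<exists>c v'. (v, c, v') \<in> E)"

definition path_words :: "('v \<times> 'd \<times> 'v) set \<Rightarrow> 'v \<Rightarrow> (nat \<Rightarrow> 'd) set" where
  "path_words E v = {w. \<exists>p. p 0 = v \<and> (\<forall>i. (p i, w i, p (Suc i)) \<in> E)}"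

definition gval :: "((nat \<Rightarrow> 'd) \<Rightarrow> 'x::complete_lattice) \<Rightarrow> ('v \<times> 'd \<times> 'v) set \<Rightarrow> 'v \<Rightarrow> 'x" where
  "gval val E v = (SUP w \<in> path_words E v. val w)"

fun fpath :: "('v \<times> 'd \<times> 'v) set \<Rightarrow> 'v \<Rightarrow> ('v \<times> 'd \<times> 'v) list \<Rightarrow> 'v \<Rightarrow> bool" where
  "fpath E u [] v \<longleftrightarrow> u = v"
| "fpath E u (e # es) v \<longleftrightarrow> e \<in> E \<and> fst e = u \<and> fpath E (snd (snd e)) es v"

definition is_tree :: "'v set \<Rightarrow> ('v \<times> 'd \<times> 'v) set \<Rightarrow> 'v \<Rightarrow> bool" where
  "is_tree V E t0 \<longleftrightarrow> is_graph V E \<and> t0 \<in> V \<and> (\<forall>v\<in>V. \<exists>!es. fpath E t0 es v)"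

definition is_morphism :: "'v set \<Rightarrow> ('v \<times> 'd \<times> 'v) set \<Rightarrow> 'w set \<Rightarrow> ('w \<times> 'd \<times> 'w) set
    \<Rightarrow> ('v \<Rightarrow> 'w) \<Rightarrow> bool" where
  "is_morphism V1 E1 V2 E2 \<phi> \<longleftrightarrow>
     (\<forall>v\<in>V1. \<phi> v \<in> V2) \<and> (\<forall>v c v'. (v, c, v') \<in> E1 \<longrightarrow> (\<phi> v, c, \<phi> v') \<in> E2)"

(* (kappa, val)-universality, with kappa = |K|.  Trees range over trees whose vertices
   live in the type of K (every tree of cardinality < |K| is isomorphic to such a tree). *)
definition universal :: "((nat \<Rightarrow> 'd) \<Rightarrow> 'x::complete_lattice) \<Rightarrow> 'k set \<Rightarrow> 'v set
    \<Rightarrow> ('v \<times> 'd \<times> 'v) set \<Rightarrow> bool" where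
  "universal val K V E \<longleftrightarrow>
     (\<forall>(VT::'k set) (ET::('k \<times> 'd \<times> 'k) set) t0.
        is_tree VT ET t0 \<and> card_lt VT K \<longrightarrow>
        (\<exists>\<phi>. is_morphism VT ET V E \<phi> \<and> gval val E (\<phi> t0) \<le> gval val ET t0))"

(* partially ordered graph (V,E,r), r \<subseteq> V \<times> V, (a,b) \<in> r meaning a \<le> b *)
definition mono_graph :: "'v set \<Rightarrow> ('v \<times> 'd \<times> 'v) set \<Rightarrow> ('v \<times> 'v) set \<Rightarrow> bool" where
  "mono_graph V E r \<longleftrightarrow> partial_order_on V r \<and>
     (\<forall>u v v' u' c. (v, u) \<in> r \<and> (v, c, v') \<in> E \<and> (u', v') \<in> r \<longrightarrow> (u, c, u') \<in> E)"

definition well_mono :: "'v set \<Rightarrow> ('v \<times> 'd \<times> 'v) set \<Rightarrow> ('v \<times> 'v) set \<Rightarrow> bool" where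
  "well_mono V E r \<longleftrightarrow> mono_graph V E r \<and> wf (r - Id)"

definition width_le :: "'v set \<Rightarrow> ('v \<times> 'v) set \<Rightarrow> nat \<Rightarrow> bool" where
  "width_le V r m \<longleftrightarrow>
     (\<forall>A \<subseteq> V. (\<forall>a\<in>A. \<forall>b\<in>A. (a, b) \<in> r \<longrightarrow> a = b) \<longrightarrow> finite A \<and> card A \<le> m)"

(* C^eps = 'c option, with None playing the role of epsilon *)
definition eps_order :: "('v \<times> 'c option \<times> 'v) set \<Rightarrow> ('v \<times> 'v) set" where
  "eps_order E = {(v, v'). (v', None, v) \<in> E}"

definition eps_separated :: "'v set \<Rightarrow> ('v \<times> 'c option \<times> 'v) set \<Rightarrow> 'j set \<Rightarrow> ('j \<Rightarrow> 'v set) \<Rightarrow> bool" where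
  "eps_separated V E M P \<longleftrightarrow>
     is_graph V E \<and> mono_graph V E (eps_order E) \<and>
     (\<forall>j\<in>M. P j \<subseteq> V) \<and> (\<Union>j\<in>M. P j) = V \<and>
     (\<forall>i\<in>M. \<forall>j\<in>M. i \<noteq> j \<longrightarrow> P i \<inter> P j = {}) \<and>
     (\<forall>j\<in>M. \<forall>a\<in>P j. \<forall>b\<in>P j. (a, b) \<in> eps_order E \<or> (b, a) \<in> eps_order E) \<and>
     (\<forall>v v'. (v, None, v') \<in> E \<longrightarrow> (\<exists>j\<in>M. v \<in> P j \<and> v' \<in> P j))"

definition prepend :: "'c list \<Rightarrow> (nat \<Rightarrow> 'c) \<Rightarrow> nat \<Rightarrow> 'c" where
  "prepend u w n = (if n < length u then u ! n else w (n - length u))"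

definition eps_val :: "((nat \<Rightarrow> 'c) \<Rightarrow> 'x::complete_lattice) \<Rightarrow> (nat \<Rightarrow> 'c option) \<Rightarrow> 'x" where
  "eps_val val w =
     (if infinite {i. w i \<noteq> None}
      then val (\<lambda>n. the (w (Infinite_Set.enumerate {i. w i \<noteq> None} n)))
      else (let N = (LEAST N. \<forall>i\<ge>N. w i = None);
                u = map (the \<circ> w) (filter (\<lambda>i. w i \<noteq> None) [0..<N])
            in (INF w' \<in> UNIV. val (prepend u w'))))"

definition is_game :: "'v set \<Rightarrow> ('v \<times> 'd \<times> 'v) set \<Rightarrow> 'v set \<Rightarrow> 'v \<Rightarrow> bool" where
  "is_game V E VE v0 \<longleftrightarrow> is_graph V E \<and> VE \<subseteq> V \<and> v0 \<in> V"

definition is_strategy :: "'v set \<Rightarrow> ('v \<times> 'd \<times> 'v) set \<Rightarrow> 'v set \<Rightarrow> 'v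
    \<Rightarrow> 's set \<Rightarrow> ('s \<times> 'd \<times> 's) set \<Rightarrow> ('s \<Rightarrow> 'v) \<Rightarrow> 's \<Rightarrow> bool" where
  "is_strategy V E VE v0 VS ES \<pi> s0 \<longleftrightarrow>
     is_graph VS ES \<and> is_morphism VS ES V E \<pi> \<and> s0 \<in> VS \<and> \<pi> s0 = v0 \<and>
     (\<forall>v \<in> V - VE. \<forall>c v'. (v, c, v') \<in> E \<longrightarrow>
        (\<forall>s\<in>VS. \<pi> s = v \<longrightarrow> (\<exists>s'\<in>VS. \<pi> s' = v' \<and> (s, c, s') \<in> ES)))"

definition is_eps_strategy :: "'v set \<Rightarrow> ('v \<times> 'c option \<times> 'v) set \<Rightarrow> 'v set \<Rightarrow> 'v \<Rightarrow> 'm set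
    \<Rightarrow> ('v \<times> 'm) set \<Rightarrow> (('v \<times> 'm) \<times> 'c option \<times> ('v \<times> 'm)) set \<Rightarrow> ('v \<times> 'm) \<Rightarrow> bool" where
  "is_eps_strategy V E VE v0 M VS ES s0 \<longleftrightarrow>
     VS \<subseteq> V \<times> M \<and> is_strategy V E VE v0 VS ES fst s0 \<and>
     (\<forall>v mm v' mm'. ((v, mm), None, (v', mm')) \<in> ES \<longrightarrow> mm = mm')"

definition game_value :: "((nat \<Rightarrow> 'd) \<Rightarrow> 'x::complete_lattice) \<Rightarrow> 'v set \<Rightarrow> ('v \<times> 'd \<times> 'v) set
    \<Rightarrow> 'v set \<Rightarrow> 'v \<Rightarrow> 's itself \<Rightarrow> 'x" where
  "game_value val V E VE v0 _ =
     (INF S \<in> {(VS :: 's set, ES, \<pi>, s0). is_strategy V E VE v0 VS ES \<pi> s0}.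
        (case S of (VS, ES, \<pi>, s0) \<Rightarrow> gval val ES s0))"

(* eps-memory \<le> m, for eps-games with vertices in 'v, strategies compared against all
   strategies living in type 's (memory sets WLOG subsets of nat).  The eps-strategy is
   itself a strategy, so "\<le> game value" means it attains the value. *)
definition eps_memory_le :: "((nat \<Rightarrow> 'c) \<Rightarrow> 'x::complete_lattice) \<Rightarrow> nat \<Rightarrow> 'v itself \<Rightarrow> 's itself \<Rightarrow> bool" where
  "eps_memory_le val m _ _ \<longleftrightarrow>
     (\<forall>(V :: 'v set) (E :: ('v \<times> 'c option \<times> 'v) set) VE v0. is_game V E VE v0 \<longrightarrow>
        (\<exists>(M :: nat set) VS ES s0. finite M \<and> card M \<le> m \<and>
           is_eps_strategy V E VE v0 M VS ES s0 \<and>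
           gval (eps_val val) ES s0 \<le> game_value (eps_val val) V E VE v0 TYPE('s)))"

end

theory Submission
  imports Defs "HOL-Analysis.Analysis"
begin


definition achain :: "('a \<times> 'a) set \<Rightarrow> 'a set \<Rightarrow> bool" where
  "achain r A \<longleftrightarrow> (\<forall>a\<in>A. \<forall>b\<in>A. (a, b) \<in> r \<longrightarrow> a = b)"

lemma finite_minimal:
  assumes "finite F" "F \<noteq> {}" "trans r" "antisym r"
  shows "\<exists>x\<in>F. \<forall>z\<in>F. (z, x) \<in> r \<longrightarrow> z = x"
  using assms
proof (induction F rule: finite_ne_induct)
  case (singleton x) then show ?case by auto
next
  case (insert a F)
  then obtain x where x: "x \<in> F" "\<forall>z\<in>F. (z, x) \<in> r \<longrightarrow> z = x" by auto
  show ?case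
  proof (cases "(a, x) \<in> r")
    case True
    have "\<forall>z\<in>insert a F. (z, a) \<in> r \<longrightarrow> z = a"
    proof
      fix z assume z: "z \<in> insert a F"
      show "(z, a) \<in> r \<longrightarrow> z = a"
      proof
        assume za: "(z, a) \<in> r"
        show "z = a"
        proof (cases "z = a")
          case False
          then have "z \<in> F" using z by auto
          have "(z, x) \<in> r" using za True insert.prems(1) unfolding trans_def by blast
          then have "z = x" using x \<open>z \<in> F\<close> by auto
          then show ?thesis using za True insert.prems(2) unfolding antisym_def by blast
        qed
      qed
    qed
    then show ?thesis by auto
  next
    case False
    then show ?thesis using x by (metis insert_iff)
  qed
qed

lemma finite_minimal_conv:
  assumes "finite F" "F \<noteq> {}" "trans r" "antisym r"
  shows "\<exists>x\<in>F. \<forall>z\<in>F. (x, z) \<in> r \<longrightarrow> z = x"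
proof -
  have "trans (r\<inverse>)" "antisym (r\<inverse>)" using assms(3,4) by simp_all
  from finite_minimal[OF assms(1,2) this] show ?thesis by (metis converse_iff)
qed

lemma dilworth_finite:
  assumes po: "refl_on V r" "trans r" "antisym r"
    and "finite F" "F \<subseteq> V"
    and "\<forall>A \<subseteq> F. achain r A \<longrightarrow> card A \<le> k"
  shows "\<exists>f. (\<forall>x\<in>F. f x < k) \<and> (\<forall>x\<in>F. \<forall>y\<in>F. f x = f y \<longrightarrow> (x, y) \<in> r \<or> (y, x) \<in> r)"
  using assms(4-)
proof (induction "card F" arbitrary: F k rule: less_induct)
  case less
  have refl: "\<And>z. z \<in> V \<Longrightarrow> (z, z) \<in> r" using po(1) unfolding refl_on_def by auto
  have tr: "\<And>a b c. (a, b) \<in> r \<Longrightarrow> (b, c) \<in> r \<Longrightarrow> (a, c) \<in> r" using po(2) unfolding trans_def by blast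
  have as: "\<And>a b. (a, b) \<in> r \<Longrightarrow> (b, a) \<in> r \<Longrightarrow> a = b" using po(3) unfolding antisym_def by blast
  show ?case
  proof (cases "F = {}")
    case True then show ?thesis by auto
  next
    case False
    obtain x where x: "x \<in> F" "\<forall>z\<in>F. (z, x) \<in> r \<longrightarrow> z = x"
      using finite_minimal[OF less.prems(1) False po(2,3)] by auto
    have Fx: "finite {z\<in>F. (x, z) \<in> r}" "{z\<in>F. (x, z) \<in> r} \<noteq> {}"
    proof -
      show "finite {z\<in>F. (x, z) \<in> r}" using less.prems(1) by simp
      have "x \<in> V" using x(1) less.prems(2) by blast
      then have "(x, x) \<in> r" by (rule refl)
      then show "{z\<in>F. (x, z) \<in> r} \<noteq> {}" using x(1) by blast
    qed
    obtain y where y: "y \<in> F" "(x, y) \<in> r" "\<forall>z\<in>F. (y, z) \<in> r \<longrightarrow> z = y"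
    proof -
      obtain y where y: "y \<in> {z\<in>F. (x, z) \<in> r}" "\<forall>z\<in>{z\<in>F. (x, z) \<in> r}. (y, z) \<in> r \<longrightarrow> z = y"
        using finite_minimal_conv[OF Fx po(2,3)] by blast
      have y3: "\<forall>z\<in>F. (y, z) \<in> r \<longrightarrow> z = y"
      proof (intro ballI impI)
        fix z assume "z \<in> F" "(y, z) \<in> r"
        moreover have "(x, y) \<in> r" using y(1) by simp
        ultimately have "(x, z) \<in> r" using tr by blast
        then show "z = y" using y(2) \<open>z \<in> F\<close> \<open>(y, z) \<in> r\<close> by simp
      qed
      have "y \<in> F" "(x, y) \<in> r" using y(1) by simp_all
      then show ?thesis using y3 by (rule that)
    qed
    have "achain r {x}" unfolding achain_def by auto
    moreover have "{x} \<subseteq> F" using x(1) by simp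
    ultimately have "card {x} \<le> k" using less.prems(3) by blast
    then have k1: "1 \<le> k" by simp
    define C where "C = {x, y}"
    show ?thesis
    proof (cases "\<forall>A \<subseteq> F - C. achain r A \<longrightarrow> card A \<le> k - 1")
      case True
      have "card (F - C) < card F" using x less.prems(1) unfolding C_def
        by (metis Diff_iff card_seteq insertCI linorder_not_le subsetI Diff_subset)
      from less.hyps[OF this _ _ True] less.prems
      obtain g where g: "\<forall>z\<in>F - C. g z < k - 1"
        "\<forall>a\<in>F - C. \<forall>b\<in>F - C. g a = g b \<longrightarrow> (a, b) \<in> r \<or> (b, a) \<in> r" by auto
      define f where "f z = (if z \<in> C then k - 1 else g z)" for z
      have "\<forall>z\<in>F. f z < k"
      proof
        fix z assume z: "z \<in> F"
        show "f z < k"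
        proof (cases "z \<in> C")
          case True then show ?thesis using k1 by (simp add: f_def)
        next
          case False then have "g z < k - 1" using g(1) z by blast
          then show ?thesis using False by (simp add: f_def)
        qed
      qed
      moreover have "\<forall>a\<in>F. \<forall>b\<in>F. f a = f b \<longrightarrow> (a, b) \<in> r \<or> (b, a) \<in> r"
      proof (intro ballI impI)
        fix a b assume ab: "a \<in> F" "b \<in> F" "f a = f b"
        show "(a, b) \<in> r \<or> (b, a) \<in> r"
        proof (cases "a \<in> C")
          case True
          then have "b \<in> C" using ab g unfolding f_def by (metis DiffI less_irrefl)
          then show ?thesis using True y x(1) less.prems(2) refl unfolding C_def by blast
        next
          case False
          then have "b \<notin> C" using ab g unfolding f_def by (metis DiffI less_irrefl)
          then show ?thesis using False ab g unfolding f_def by auto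
        qed
      qed
      ultimately show ?thesis by blast
    next
      case False
      then obtain A where A: "A \<subseteq> F - C" "achain r A" "\<not> card A \<le> k - 1" by blast
      have AF: "A \<subseteq> F" using A(1) by blast
      have finA: "finite A" using AF less.prems(1) by (rule finite_subset)
      have "card A \<le> k" using less.prems(3) AF A(2) by blast
      then have cardA: "card A = k" using A(3) by linarith
      define Fm where "Fm = {z\<in>F. \<exists>a\<in>A. (z, a) \<in> r}"
      define Fp where "Fp = {z\<in>F. \<exists>a\<in>A. (a, z) \<in> r}"
      have AV: "A \<subseteq> V" using AF less.prems by auto
      have AFm: "A \<subseteq> Fm" unfolding Fm_def using AF AV refl by auto
      have AFp: "A \<subseteq> Fp" unfolding Fp_def using AF AV refl by auto
      have cover: "z \<in> Fm \<or> z \<in> Fp" if z: "z \<in> F" for z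
      proof (rule ccontr)
        assume nz: "\<not> (z \<in> Fm \<or> z \<in> Fp)"
        then have zA: "z \<notin> A" using AFm by auto
        have "achain r (insert z A)" using A(2) nz z unfolding achain_def Fm_def Fp_def by auto
        moreover have "insert z A \<subseteq> F" using z AF by auto
        ultimately have "card (insert z A) \<le> k" using less.prems(3) by auto
        then show False using zA finA cardA by auto
      qed
      have yFm: "y \<notin> Fm"
      proof
        assume "y \<in> Fm"
        then obtain a where "a \<in> A" "(y, a) \<in> r" unfolding Fm_def by auto
        then have "a = y" using y AF by auto
        then show False using \<open>a \<in> A\<close> A(1) unfolding C_def by auto
      qed
      have xFp: "x \<notin> Fp"
      proof
        assume "x \<in> Fp"
        then obtain a where "a \<in> A" "(a, x) \<in> r" unfolding Fp_def by auto
        then have "a = x" using x AF by auto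
        then show False using \<open>a \<in> A\<close> A(1) unfolding C_def by auto
      qed
      have cFm: "card Fm < card F"
        by (metis (no_types, lifting) Fm_def less.prems(1) mem_Collect_eq psubsetI psubset_card_mono subsetI y(1) yFm)
      have cFp: "card Fp < card F"
        by (metis (no_types, lifting) Fp_def less.prems(1) mem_Collect_eq psubsetI psubset_card_mono subsetI x(1) xFp)
      have finFm: "finite Fm" "Fm \<subseteq> V" using less.prems unfolding Fm_def by auto
      have finFp: "finite Fp" "Fp \<subseteq> V" using less.prems unfolding Fp_def by auto
      have acm: "\<forall>B \<subseteq> Fm. achain r B \<longrightarrow> card B \<le> k" using less.prems(3) unfolding Fm_def by auto
      have acp: "\<forall>B \<subseteq> Fp. achain r B \<longrightarrow> card B \<le> k" using less.prems(3) unfolding Fp_def by auto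
      obtain gm where gm: "\<forall>z\<in>Fm. gm z < k" "\<forall>a\<in>Fm. \<forall>b\<in>Fm. gm a = gm b \<longrightarrow> (a, b) \<in> r \<or> (b, a) \<in> r"
        using less.hyps[OF cFm finFm acm] by auto
      obtain gp where gp: "\<forall>z\<in>Fp. gp z < k" "\<forall>a\<in>Fp. \<forall>b\<in>Fp. gp a = gp b \<longrightarrow> (a, b) \<in> r \<or> (b, a) \<in> r"
        using less.hyps[OF cFp finFp acp] by auto
      have injm: "inj_on gm A"
      proof (rule inj_onI)
        fix a b assume ab: "a \<in> A" "b \<in> A" "gm a = gm b"
        then have "(a, b) \<in> r \<or> (b, a) \<in> r" using gm(2) AFm by blast
        then show "a = b" using A(2) ab(1,2) unfolding achain_def by metis
      qed
      have injp: "inj_on gp A"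
      proof (rule inj_onI)
        fix a b assume ab: "a \<in> A" "b \<in> A" "gp a = gp b"
        then have "(a, b) \<in> r \<or> (b, a) \<in> r" using gp(2) AFp by blast
        then show "a = b" using A(2) ab(1,2) unfolding achain_def by metis
      qed
      have imA: "gm ` A = {..<k}"
      proof (rule card_subset_eq)
        show "gm ` A \<subseteq> {..<k}" using gm(1) AFm by auto
        show "card (gm ` A) = card {..<k}" using card_image[OF injm] cardA by simp
      qed auto
      define sel where "sel z = (THE a. a \<in> A \<and> gm a = gm z)" for z
      have sel: "sel z \<in> A \<and> gm (sel z) = gm z" if "z \<in> Fm" for z
      proof -
        have "gm z \<in> gm ` A" using imA gm(1) that by auto
        then obtain a where a: "a \<in> A" "gm a = gm z" by (metis imageE)
        have "\<exists>!a. a \<in> A \<and> gm a = gm z"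
        proof (rule ex1I[where a=a])
          show "a \<in> A \<and> gm a = gm z" using a by blast
          fix b assume "b \<in> A \<and> gm b = gm z"
          then show "b = a" using injm a by (metis inj_onD)
        qed
        then show ?thesis unfolding sel_def by (rule theI')
      qed
      have selA: "sel z = z" if "z \<in> A" for z
      proof -
        have "z \<in> Fm" using that AFm by blast
        then have s1: "sel z \<in> A" and s2: "gm (sel z) = gm z" using sel by blast+
        show ?thesis using inj_onD[OF injm s2 s1 that] .
      qed
      define f where "f z = (if z \<in> Fp then gp z else gp (sel z))" for z
      have fm: "f z = gp (sel z)" if zFm: "z \<in> Fm" for z
      proof (cases "z \<in> Fp")
        case True
        then obtain a where a: "a \<in> A" "(a, z) \<in> r" unfolding Fp_def by auto
        obtain b where b: "b \<in> A" "(z, b) \<in> r" using zFm unfolding Fm_def by auto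
        have "(a, b) \<in> r" using a b tr by blast
        then have "a = b" using A(2) a b unfolding achain_def by auto
        then have "z = a" using a b as by auto
        then show ?thesis unfolding f_def using selA a by auto
      qed (simp add: f_def)
      have fp: "f z = gp z" if "z \<in> Fp" for z using that unfolding f_def by auto
      have below: "(z, sel z) \<in> r" if H: "z \<in> Fm" for z
      proof -
        obtain a' where a': "a' \<in> A" "(z, a') \<in> r" using H unfolding Fm_def by auto
        have "(z, sel z) \<in> r \<or> (sel z, z) \<in> r" using gm(2) sel[OF H] AFm H by auto
        then show ?thesis
        proof
          assume "(sel z, z) \<in> r"
          then have "(sel z, a') \<in> r" using a' tr by blast
          then have "sel z = a'" using A(2) a' sel[OF H] unfolding achain_def by auto
          then show ?thesis using a' by simp
        qed
      qed
      have above: "(a, z) \<in> r" if H: "z \<in> Fp" "a \<in> A" "gp a = gp z" for z a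
      proof -
        obtain a' where a': "a' \<in> A" "(a', z) \<in> r" using H unfolding Fp_def by auto
        have "(a, z) \<in> r \<or> (z, a) \<in> r" using gp(2) H AFp by auto
        then show ?thesis
        proof
          assume "(z, a) \<in> r"
          then have "(a', a) \<in> r" using a' tr by blast
          then have "a' = a" using A(2) a' H unfolding achain_def by auto
          then show ?thesis using a' by simp
        qed
      qed
      have "\<forall>z\<in>F. f z < k"
      proof
        fix z assume "z \<in> F"
        show "f z < k"
        proof (cases "z \<in> Fp")
          case True then show ?thesis using fp gp(1) by simp
        next
          case False
          then have zm: "z \<in> Fm" using cover \<open>z \<in> F\<close> by blast
          then have "sel z \<in> Fp" using sel AFp by blast
          then show ?thesis using fm[OF zm] gp(1) by simp
        qed
      qed
      moreover have "\<forall>a\<in>F. \<forall>b\<in>F. f a = f b \<longrightarrow> (a, b) \<in> r \<or> (b, a) \<in> r"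
      proof (intro ballI impI)
        fix a b assume ab: "a \<in> F" "b \<in> F" "f a = f b"
        have mp: "(a, b) \<in> r" if "a \<in> Fm" "b \<in> Fp" "f a = f b" for a b
        proof -
          have "gp (sel a) = gp b" using that fm fp by auto
          then have "(sel a, b) \<in> r" using above[of b "sel a"] that sel by auto
          then show ?thesis using below[OF that(1)] tr by blast
        qed
        show "(a, b) \<in> r \<or> (b, a) \<in> r"
        proof (cases "a \<in> Fp \<and> b \<in> Fp")
          case True then show ?thesis using gp(2) fp ab by auto
        next
          case nFp: False
          show ?thesis
          proof (cases "a \<in> Fm \<and> b \<in> Fm")
            case True
            then have "gp (sel a) = gp (sel b)" using fm ab by auto
            then have "sel a = sel b" using injp sel True unfolding inj_on_def by auto
            then have "gm a = gm b" using sel True by metis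
            then show ?thesis using gm(2) True by auto
          next
            case False
            have "(a \<in> Fm \<and> b \<in> Fp) \<or> (b \<in> Fm \<and> a \<in> Fp)"
              using False nFp cover[OF ab(1)] cover[OF ab(2)] by blast
            then show ?thesis
            proof
              assume "a \<in> Fm \<and> b \<in> Fp"
              then show ?thesis using mp[of a b] ab(3) by blast
            next
              assume "b \<in> Fm \<and> a \<in> Fp"
              then show ?thesis using mp[of b a] ab(3) by simp
            qed
          qed
        qed
      qed
      ultimately show ?thesis by blast
    qed
  qed
qed



lemma dilworth_inf:
  assumes po: "refl_on V r" "trans r" "antisym r"
    and ac: "\<forall>A \<subseteq> V. achain r A \<longrightarrow> finite A \<and> card A \<le> m"
  shows "\<exists>f. (\<forall>x\<in>V. f x < m) \<and> (\<forall>x\<in>V. \<forall>y\<in>V. f x = f y \<longrightarrow> (x, y) \<in> r \<or> (y, x) \<in> r)"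
proof (cases "V = {}")
  case True then show ?thesis by auto
next
  case False
  then obtain v0 where v0: "v0 \<in> V" by blast
  have "achain r {v0}" unfolding achain_def by auto
  then have "card {v0} \<le> m" using ac v0 by blast
  then have m1: "0 < m" by simp
  define X where "X = product_topology (\<lambda>_. discrete_topology {..<m}) V"
  have cX: "compact_space X" unfolding X_def compact_space_product_topology
    by (simp add: compact_space_discrete_topology)
  have tX: "topspace X = (\<Pi>\<^sub>E x\<in>V. {..<m})" by (simp add: X_def)
  define CF where "CF F = {f \<in> topspace X. \<forall>x\<in>F. \<forall>y\<in>F. f x = f y \<longrightarrow> (x, y) \<in> r \<or> (y, x) \<in> r}" for F
  have opeq: "openin X {f \<in> topspace X. f x = f y}" if "x \<in> V" "y \<in> V" for x y
  proof -
    have cx: "continuous_map X (discrete_topology {..<m}) (\<lambda>f. f x)"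
      unfolding X_def using that by (intro continuous_map_product_projection) 
    have cy: "continuous_map X (discrete_topology {..<m}) (\<lambda>f. f y)"
      unfolding X_def using that by (intro continuous_map_product_projection) 
    have "{f \<in> topspace X. f x = f y} = (\<Union>i\<in>{..<m}. {f \<in> topspace X. f x \<in> {i}} \<inter> {f \<in> topspace X. f y \<in> {i}})"
      using that by (auto simp: tX PiE_iff)
    moreover have "openin X ({f \<in> topspace X. f x \<in> {i}} \<inter> {f \<in> topspace X. f y \<in> {i}})" if "i < m" for i
      using that openin_continuous_map_preimage[OF cx, of "{i}"] openin_continuous_map_preimage[OF cy, of "{i}"]
      by (intro openin_Int) auto
    ultimately show ?thesis by (auto intro!: openin_Union)
  qed
  have closed: "closedin X (CF F)" if F: "F \<subseteq> V" for F
  proof -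
    have "topspace X - CF F = (\<Union>p\<in>{(x, y). x \<in> F \<and> y \<in> F \<and> \<not> ((x, y) \<in> r \<or> (y, x) \<in> r)}.
            {f \<in> topspace X. f (fst p) = f (snd p)})"
      unfolding CF_def by fastforce
    moreover have "openin X (\<Union>p\<in>{(x, y). x \<in> F \<and> y \<in> F \<and> \<not> ((x, y) \<in> r \<or> (y, x) \<in> r)}.
            {f \<in> topspace X. f (fst p) = f (snd p)})"
      using opeq F by (intro openin_Union) (auto simp: subset_iff)
    ultimately show ?thesis unfolding closedin_def CF_def by auto
  qed
  have ne: "CF F \<noteq> {}" if F: "finite F" "F \<subseteq> V" for F
  proof -
    have "\<forall>A \<subseteq> F. achain r A \<longrightarrow> card A \<le> m" using ac F by blast
    from dilworth_finite[OF po F this] obtain f where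
      f: "\<forall>x\<in>F. f x < m" "\<forall>x\<in>F. \<forall>y\<in>F. f x = f y \<longrightarrow> (x, y) \<in> r \<or> (y, x) \<in> r" by blast
    define g where "g x = (if x \<in> V then (if x \<in> F then f x else 0) else undefined)" for x
    have "g \<in> CF F" unfolding CF_def tX g_def using f m1 F by (auto simp: PiE_iff extensional_def)
    then show ?thesis by blast
  qed
  have mono: "CF G \<subseteq> CF F" if "F \<subseteq> G" for F G using that unfolding CF_def by blast
  define U where "U = CF ` {F. finite F \<and> F \<subseteq> V}"
  have "(\<forall>C\<in>U. closedin X C) \<and> (\<forall>\<F>. finite \<F> \<and> \<F> \<subseteq> U \<longrightarrow> \<Inter> \<F> \<noteq> {})"
  proof (intro conjI)
    show "\<forall>C\<in>U. closedin X C" unfolding U_def using closed by blast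
    show "\<forall>\<F>. finite \<F> \<and> \<F> \<subseteq> U \<longrightarrow> \<Inter> \<F> \<noteq> {}"
    proof (intro allI impI)
      fix \<F> assume H: "finite \<F> \<and> \<F> \<subseteq> U"
      then obtain G where G: "G \<subseteq> {F. finite F \<and> F \<subseteq> V}" "finite G" "\<F> = CF ` G"
        unfolding U_def by (meson finite_subset_image)
      have fin: "finite (\<Union>G)" "\<Union>G \<subseteq> V" using G by auto
      have "CF (\<Union>G) \<subseteq> \<Inter>\<F>" using G mono by blast
      then show "\<Inter>\<F> \<noteq> {}" using ne[OF fin] by blast
    qed
  qed
  then have "\<Inter>U \<noteq> {}" using cX unfolding compact_space_fip by blast
  then obtain g where g: "g \<in> \<Inter>U" by blast
  have gC: "g \<in> CF F" if "finite F" "F \<subseteq> V" for F using g that unfolding U_def by blast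
  show ?thesis
  proof (intro exI[of _ g] conjI ballI impI)
    fix x assume "x \<in> V"
    then show "g x < m" using gC[of "{}"] unfolding CF_def tX by (auto simp: PiE_iff)
  next
    fix x y assume "x \<in> V" "y \<in> V" "g x = g y"
    then show "(x, y) \<in> r \<or> (y, x) \<in> r" using gC[of "{x, y}"] unfolding CF_def by auto
  qed
qed



section \<open>Finite paths\<close>

lemma graph_edgeD:
  assumes "is_graph V E" "(a, c, b) \<in> E"
  shows "a \<in> V" "b \<in> V"
proof -
  have "(a, c, b) \<in> V \<times> UNIV \<times> V" using assms unfolding is_graph_def by blast
  then show "a \<in> V" "b \<in> V" by auto
qed

lemma graph_succ:
  assumes "is_graph V E" "a \<in> V"
  obtains c b where "(a, c, b) \<in> E"
  using assms unfolding is_graph_def by blast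


lemma fpath_append:
  "fpath E u (es @ es') w \<longleftrightarrow> (\<exists>v. fpath E u es v \<and> fpath E v es' w)"
  by (induction es arbitrary: u) auto

lemma fpath_snoc:
  "fpath E u (es @ [e]) w \<longleftrightarrow> (fpath E u es (fst e) \<and> e \<in> E \<and> snd (snd e) = w)"
  by (auto simp: fpath_append)

lemma fpath_nth_in:
  "fpath E u es v \<Longrightarrow> i < length es \<Longrightarrow> es ! i \<in> E"
  by (induction es arbitrary: u i) (auto simp: nth_Cons split: nat.splits)

lemma fpath_nth_fst:
  "fpath E u es v \<Longrightarrow> i < length es \<Longrightarrow> fst (es ! i) = (if i = 0 then u else snd (snd (es ! (i - 1))))"
proof (induction es arbitrary: u i)
  case Nil then show ?case by simp
next
  case (Cons e es)
  show ?case
  proof (cases i)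
    case 0 then show ?thesis using Cons by simp
  next
    case (Suc i')
    then have "fst (es ! i') = (if i' = 0 then snd (snd e) else snd (snd (es ! (i' - 1))))"
      using Cons by auto
    then show ?thesis using Suc by (cases i') auto
  qed
qed

lemma fpath_last:
  "fpath E u es v \<Longrightarrow> es \<noteq> [] \<Longrightarrow> snd (snd (es ! (length es - 1))) = v"
proof (induction es arbitrary: u)
  case Nil then show ?case by simp
next
  case (Cons e es)
  then show ?case by (cases es) (auto simp: nth_Cons split: nat.splits)
qed

lemma fpath_in_V:
  assumes "is_graph V E" "u \<in> V" "fpath E u es v"
  shows "v \<in> V"
  using assms(2,3)
proof (induction es arbitrary: u)
  case Nil then show ?case by simp
next
  case (Cons e es)
  then have "e \<in> E" by simp
  then have "snd (snd e) \<in> V" using graph_edgeD(2)[OF assms(1), of "fst e" "fst (snd e)" "snd (snd e)"] by simp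
  then show ?case using Cons by auto
qed

section \<open>Path words and morphisms\<close>

lemma path_wordsI:
  "p 0 = v \<Longrightarrow> (\<forall>i. (p i, w i, p (Suc i)) \<in> E) \<Longrightarrow> w \<in> path_words E v"
  unfolding path_words_def by blast

lemma gval_ge: "w \<in> path_words E v \<Longrightarrow> val w \<le> gval val E v"
  unfolding gval_def by (rule SUP_upper)

lemma gval_mono_words:
  "path_words E1 v \<subseteq> path_words E2 u \<Longrightarrow> gval val E1 v \<le> gval val E2 u"
  unfolding gval_def by (rule SUP_subset_mono) auto

lemma gval_le_words:
  "(\<And>w. w \<in> path_words E1 v \<Longrightarrow> val w \<le> x) \<Longrightarrow> gval val E1 v \<le> x"
  unfolding gval_def by (rule SUP_least)

lemma morph_words:
  assumes "is_morphism V1 E1 V2 E2 \<phi>"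
  shows "path_words E1 v \<subseteq> path_words E2 (\<phi> v)"
proof
  fix w assume "w \<in> path_words E1 v"
  then obtain p where p: "p 0 = v" "\<forall>i. (p i, w i, p (Suc i)) \<in> E1" unfolding path_words_def by blast
  have "\<forall>i. ((\<phi> \<circ> p) i, w i, (\<phi> \<circ> p) (Suc i)) \<in> E2"
    using p(2) assms unfolding is_morphism_def by auto
  then show "w \<in> path_words E2 (\<phi> v)" using p(1) by (intro path_wordsI[of "\<phi> \<circ> p"]) auto
qed

lemma morph_gval:
  "is_morphism V1 E1 V2 E2 \<phi> \<Longrightarrow> gval val E1 v \<le> gval val E2 (\<phi> v)"
  by (rule gval_mono_words) (rule morph_words)

lemma morph_comp:
  "is_morphism V1 E1 V2 E2 f \<Longrightarrow> is_morphism V2 E2 V3 E3 g \<Longrightarrow> is_morphism V1 E1 V3 E3 (g \<circ> f)"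
  unfolding is_morphism_def by auto

section \<open>Infinite paths\<close>

lemma graph_inf_path:
  assumes "is_graph V E" "v \<in> V"
  shows "\<exists>p w. p 0 = v \<and> (\<forall>i. (p i, w i, p (Suc i)) \<in> E)"
proof -
  have nx: "\<forall>x\<in>V. \<exists>c y. (x, c, y) \<in> E \<and> y \<in> V"
  proof
    fix x assume "x \<in> V"
    then obtain c y where "(x, c, y) \<in> E" using graph_succ[OF assms(1)] by blast
    then show "\<exists>c y. (x, c, y) \<in> E \<and> y \<in> V" using graph_edgeD[OF assms(1)] by blast
  qed
  define step where "step x = (SOME cy. (x, fst cy, snd cy) \<in> E \<and> snd cy \<in> V)" for x
  have st: "(x, fst (step x), snd (step x)) \<in> E \<and> snd (step x) \<in> V" if H: "x \<in> V" for x
  proof -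
    obtain c y where "(x, c, y) \<in> E \<and> y \<in> V" using nx H by blast
    then have "\<exists>cy. (x, fst cy, snd cy) \<in> E \<and> snd cy \<in> V" by (intro exI[of _ "(c, y)"]) simp
    from someI_ex[OF this] show ?thesis unfolding step_def .
  qed
  define p where "p = rec_nat v (\<lambda>_ x. snd (step x))"
  have p0: "p 0 = v" and pS: "p (Suc i) = snd (step (p i))" for i unfolding p_def by simp_all
  have pV: "p i \<in> V" for i by (induction i) (auto simp: p0 pS assms(2) st)
  show ?thesis
    by (rule exI[of _ p], rule exI[of _ "\<lambda>i. fst (step (p i))"]) (use p0 pS pV st in auto)
qed

definition prepend_path :: "('v \<times> 'd \<times> 'v) list \<Rightarrow> (nat \<Rightarrow> 'v) \<Rightarrow> nat \<Rightarrow> 'v" where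
  "prepend_path es q i = (if i < length es then fst (es ! i) else q (i - length es))"

lemma fpath_then_inf:
  assumes "fpath E u es v" "q 0 = v" "\<forall>i. (q i, w i, q (Suc i)) \<in> E"
  shows "prepend (map (fst \<circ> snd) es) w \<in> path_words E u"
proof (rule path_wordsI[where p="prepend_path es q"])
  show "prepend_path es q 0 = u"
    using assms fpath_nth_fst[OF assms(1), of 0] by (cases es) (auto simp: prepend_path_def)
  show "\<forall>i. (prepend_path es q i, prepend (map (fst \<circ> snd) es) w i, prepend_path es q (Suc i)) \<in> E"
  proof
    fix i
    show "(prepend_path es q i, prepend (map (fst \<circ> snd) es) w i, prepend_path es q (Suc i)) \<in> E"
    proof (cases "i < length es")
      case True
      have e: "es ! i \<in> E" using fpath_nth_in[OF assms(1) True] .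
      have nxt: "prepend_path es q (Suc i) = snd (snd (es ! i))"
      proof (cases "Suc i < length es")
        case True
        then show ?thesis using fpath_nth_fst[OF assms(1) True] by (simp add: prepend_path_def)
      next
        case False
        then have "i = length es - 1" using \<open>i < length es\<close> by simp
        moreover have "es \<noteq> []" using True by auto
        ultimately have "snd (snd (es ! i)) = v" using fpath_last[OF assms(1)] by simp
        then show ?thesis using False \<open>i < length es\<close> assms(2) by (simp add: prepend_path_def)
      qed
      show ?thesis using e nxt True
        by (cases "es ! i") (simp add: prepend_path_def prepend_def)
    next
      case False
      have "(q (i - length es), w (i - length es), q (Suc (i - length es))) \<in> E" using assms(3) by blast
      moreover have "Suc i - length es = Suc (i - length es)" using False by simp
      ultimately show ?thesis using False by (simp add: prepend_path_def prepend_def)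
    qed
  qed
qed

section \<open>Unfolding\<close>

fun vp :: "('a \<times> 'd \<times> 'a) set \<Rightarrow> 'a \<Rightarrow> ('a \<times> 'd) list \<Rightarrow> bool" where
  "vp E u [] = True"
| "vp E u (x # xs) = ((u, snd x, fst x) \<in> E \<and> vp E (fst x) xs)"

definition lastv :: "'a \<Rightarrow> ('a \<times> 'd) list \<Rightarrow> 'a" where
  "lastv g xs = (if xs = [] then g else fst (last xs))"

definition unfV :: "('a \<times> 'd \<times> 'a) set \<Rightarrow> 'a \<Rightarrow> ('a \<times> 'd) list set" where
  "unfV E g = {xs. vp E g xs}"

definition unfE :: "('a \<times> 'd \<times> 'a) set \<Rightarrow> 'a \<Rightarrow> (('a \<times> 'd) list \<times> 'd \<times> ('a \<times> 'd) list) set" where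
  "unfE E g = {(xs, c, xs @ [(a, c)]) | xs c a. vp E g xs \<and> (lastv g xs, c, a) \<in> E}"

lemma lastv_Nil [simp]: "lastv g [] = g" by (simp add: lastv_def)
lemma lastv_snoc [simp]: "lastv g (xs @ [x]) = fst x" by (simp add: lastv_def)

lemma vp_snoc: "vp E u (xs @ [x]) \<longleftrightarrow> vp E u xs \<and> (lastv u xs, snd x, fst x) \<in> E"
  by (induction xs arbitrary: u) (auto simp: lastv_def)

lemma vp_lastv_in:
  assumes "is_graph V E" "u \<in> V" "vp E u xs"
  shows "lastv u xs \<in> V"
  using assms(3)
proof (induction xs rule: rev_induct)
  case Nil then show ?case using assms(2) by simp
next
  case (snoc x xs)
  then have "(lastv u xs, snd x, fst x) \<in> E" by (simp add: vp_snoc)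
  then show ?case using graph_edgeD(2)[OF assms(1)] by simp
qed

lemma unfE_mem: "(xs, c, ys) \<in> unfE E g \<longleftrightarrow> (\<exists>a. ys = xs @ [(a, c)] \<and> vp E g xs \<and> (lastv g xs, c, a) \<in> E)"
  unfolding unfE_def by blast

lemma unf_graph:
  assumes "is_graph V E" "g \<in> V"
  shows "is_graph (unfV E g) (unfE E g)"
  unfolding is_graph_def
proof
  show "unfE E g \<subseteq> unfV E g \<times> UNIV \<times> unfV E g"
    unfolding unfE_def unfV_def by (auto simp: vp_snoc)
  show "\<forall>v\<in>unfV E g. \<exists>c v'. (v, c, v') \<in> unfE E g"
  proof
    fix xs assume "xs \<in> unfV E g"
    then have xs: "vp E g xs" by (simp add: unfV_def)
    then have "lastv g xs \<in> V" using vp_lastv_in[OF assms] by blast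
    then obtain c a where "(lastv g xs, c, a) \<in> E" using graph_succ[OF assms(1)] by blast
    then have "(xs, c, xs @ [(a, c)]) \<in> unfE E g" using xs unfolding unfE_def by blast
    then show "\<exists>c v'. (xs, c, v') \<in> unfE E g" by blast
  qed
qed

lemma unf_fpath_prefix:
  "fpath (unfE E g) ys es xs \<Longrightarrow> \<exists>zs. xs = ys @ zs \<and> length zs = length es"
proof (induction es arbitrary: ys)
  case Nil then show ?case by simp
next
  case (Cons e es)
  then obtain c a where e: "e = (ys, c, ys @ [(a, c)])" "fpath (unfE E g) (ys @ [(a, c)]) es xs"
    by (cases e) (auto simp: unfE_mem)
  then obtain zs where "xs = (ys @ [(a, c)]) @ zs" "length zs = length es" using Cons.IH by blast
  then show ?case by (intro exI[of _ "(a, c) # zs"]) simp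
qed

lemma unf_fpath_unique:
  "fpath (unfE E g) ys es xs \<Longrightarrow> fpath (unfE E g) ys es' xs \<Longrightarrow> es = es'"
proof (induction es arbitrary: ys es')
  case Nil
  then have "xs = ys" by simp
  then show ?case using unf_fpath_prefix[OF Nil(2)] by simp
next
  case (Cons e es)
  obtain c a where e: "e = (ys, c, ys @ [(a, c)])" "fpath (unfE E g) (ys @ [(a, c)]) es xs"
    using Cons.prems(1) by (cases e) (auto simp: unfE_mem)
  have "es' \<noteq> []"
  proof
    assume "es' = []"
    then have "xs = ys" using Cons.prems(2) by simp
    then show False using unf_fpath_prefix[OF Cons.prems(1)] by simp
  qed
  then obtain e' es'' where es': "es' = e' # es''" by (cases es') auto
  obtain c' a' where e': "e' = (ys, c', ys @ [(a', c')])" "fpath (unfE E g) (ys @ [(a', c')]) es'' xs"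
    using Cons.prems(2) es' by (cases e') (auto simp: unfE_mem)
  obtain zs where "xs = (ys @ [(a, c)]) @ zs" using unf_fpath_prefix[OF e(2)] by blast
  moreover obtain zs' where "xs = (ys @ [(a', c')]) @ zs'" using unf_fpath_prefix[OF e'(2)] by blast
  ultimately have "(a, c) = (a', c')" by simp
  then have "e = e'" using e e' by simp
  moreover have "es = es''" using Cons.IH[OF e(2)] e'(2) \<open>(a, c) = (a', c')\<close> by simp
  ultimately show ?case using es' by simp
qed

lemma unf_fpath_exists:
  "vp E g xs \<Longrightarrow> \<exists>es. fpath (unfE E g) [] es xs"
proof (induction xs rule: rev_induct)
  case Nil then show ?case by (intro exI[of _ "[]"]) simp
next
  case (snoc x xs)
  then have xs: "vp E g xs" and ed: "(lastv g xs, snd x, fst x) \<in> E" by (simp_all add: vp_snoc)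
  then obtain es where "fpath (unfE E g) [] es xs" using snoc.IH by blast
  moreover have "(xs, snd x, xs @ [x]) \<in> unfE E g" using xs ed unfolding unfE_mem by (cases x) auto
  ultimately have "fpath (unfE E g) [] (es @ [(xs, snd x, xs @ [x])]) (xs @ [x])"
    by (simp add: fpath_snoc)
  then show ?case by blast
qed

lemma unf_tree:
  assumes "is_graph V E" "g \<in> V"
  shows "is_tree (unfV E g) (unfE E g) []"
  unfolding is_tree_def
proof (intro conjI ballI)
  show "is_graph (unfV E g) (unfE E g)" using unf_graph[OF assms] .
  show "[] \<in> unfV E g" by (simp add: unfV_def)
  fix xs assume "xs \<in> unfV E g"
  then have "vp E g xs" unfolding unfV_def by simp
  from unf_fpath_exists[OF this] obtain es where es: "fpath (unfE E g) [] es xs" by blast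
  show "\<exists>!es. fpath (unfE E g) [] es xs"
  proof (rule ex1I[of _ es])
    show "fpath (unfE E g) [] es xs" by (rule es)
    fix es' assume "fpath (unfE E g) [] es' xs"
    then show "es' = es" using unf_fpath_unique[OF es] by metis
  qed
qed

lemma unf_morph:
  assumes "is_graph V E" "g \<in> V"
  shows "is_morphism (unfV E g) (unfE E g) V E (lastv g)"
  unfolding is_morphism_def
proof (intro conjI allI impI ballI)
  fix xs assume "xs \<in> unfV E g"
  then show "lastv g xs \<in> V" using vp_lastv_in[OF assms] unfolding unfV_def by blast
next
  fix xs c ys assume "(xs, c, ys) \<in> unfE E g"
  then show "(lastv g xs, c, lastv g ys) \<in> E" unfolding unfE_mem by auto
qed

section \<open>Trees\<close>

lemma fpath_set: "fpath E u es v \<Longrightarrow> set es \<subseteq> E"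
  by (induction es arbitrary: u) auto

lemma tree_unique:
  assumes "is_tree VT ET t0" "fpath ET t0 es v" "fpath ET t0 es' v"
  shows "es = es'"
proof -
  have g: "is_graph VT ET" and t0: "t0 \<in> VT" and u: "\<forall>v\<in>VT. \<exists>!es. fpath ET t0 es v"
    using assms(1) unfolding is_tree_def by auto
  have "v \<in> VT" using fpath_in_V[OF g t0 assms(2)] .
  then show ?thesis using u assms(2,3) by metis
qed

lemma tree_in_unique:
  assumes "is_tree VT ET t0" "(s, x, t) \<in> ET" "(s', x', t) \<in> ET"
  shows "s = s' \<and> x = x'"
proof -
  have g: "is_graph VT ET" and t0: "t0 \<in> VT" and u: "\<forall>v\<in>VT. \<exists>!es. fpath ET t0 es v"
    using assms(1) unfolding is_tree_def by auto
  have "s \<in> VT" "s' \<in> VT" using graph_edgeD[OF g assms(2)] graph_edgeD[OF g assms(3)] by auto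
  then obtain es es' where es: "fpath ET t0 es s" "fpath ET t0 es' s'" using u by blast
  have "fpath ET t0 (es @ [(s, x, t)]) t" "fpath ET t0 (es' @ [(s', x', t)]) t"
    using es assms(2,3) by (simp_all add: fpath_snoc)
  then have "es @ [(s, x, t)] = es' @ [(s', x', t)]" using tree_unique[OF assms(1)] by blast
  then show ?thesis by simp
qed

definition pathlist :: "(nat \<Rightarrow> 'v) \<Rightarrow> (nat \<Rightarrow> 'd) \<Rightarrow> nat \<Rightarrow> ('v \<times> 'd \<times> 'v) list" where
  "pathlist p w n = map (\<lambda>k. (p k, w k, p (Suc k))) [0..<n]"

lemma fpath_pathlist:
  assumes "\<forall>i. (p i, w i, p (Suc i)) \<in> E"
  shows "fpath E (p 0) (pathlist p w n) (p n)"
proof (induction n)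
  case 0 then show ?case by (simp add: pathlist_def)
next
  case (Suc n)
  have "pathlist p w (Suc n) = pathlist p w n @ [(p n, w n, p (Suc n))]" by (simp add: pathlist_def)
  then show ?case using Suc assms by (simp add: fpath_snoc)
qed

lemma tree_infinite:
  assumes "is_tree VT ET t0"
  shows "infinite VT"
proof
  assume fin: "finite VT"
  have g: "is_graph VT ET" and t0: "t0 \<in> VT"
    using assms(1) unfolding is_tree_def by auto
  obtain p w where p: "p 0 = t0" "\<forall>i. (p i, w i, p (Suc i)) \<in> ET" using graph_inf_path[OF g t0] by blast
  have "p i \<in> VT" for i
  proof (cases i)
    case 0 then show ?thesis using p t0 by simp
  next
    case (Suc j) then show ?thesis using graph_edgeD(2)[OF g] p(2) by blast
  qed
  then have "range p \<subseteq> VT" by blast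
  then have "finite (range p)" using fin finite_subset by blast
  then have "\<not> inj p" using finite_imageD infinite_UNIV_nat by blast
  then obtain i j where ij: "i \<noteq> j" "p i = p j" unfolding inj_def by blast
  have "fpath ET t0 (pathlist p w i) (p i)" "fpath ET t0 (pathlist p w j) (p i)"
    using fpath_pathlist[OF p(2)] p(1) ij(2) by metis+
  then have "pathlist p w i = pathlist p w j" using tree_unique[OF assms] by blast
  then have "length (pathlist p w i) = length (pathlist p w j)" by simp
  then show False using ij(1) by (simp add: pathlist_def)
qed

definition hh :: "('a \<Rightarrow> 'b) \<Rightarrow> 'a \<times> 'd \<times> 'a \<Rightarrow> 'b \<times> 'd \<times> 'b" where
  "hh h e = (h (fst e), fst (snd e), h (snd (snd e)))"

lemma fpath_map: "fpath E u es v \<Longrightarrow> fpath (hh h ` E) (h u) (map (hh h) es) (h v)"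
  by (induction es arbitrary: u) (auto simp: hh_def)

lemma fpath_unmap:
  assumes "inj_on h VT" "is_graph VT E" "u \<in> VT" "fpath (hh h ` E) (h u) es w"
  shows "\<exists>es0 w0. fpath E u es0 w0 \<and> w = h w0 \<and> es = map (hh h) es0"
  using assms(3,4)
proof (induction es arbitrary: u)
  case Nil then show ?case by (intro exI[of _ "[]"] exI[of _ u]) simp
next
  case (Cons e es)
  then obtain a c b where abc: "(a, c, b) \<in> E" "e = hh h (a, c, b)" "h a = h u"
    "fpath (hh h ` E) (h b) es w" by (auto simp: hh_def)
  have "a \<in> VT" "b \<in> VT" using graph_edgeD[OF assms(2) abc(1)] by auto
  then have "a = u" using abc(3) Cons.prems(1) assms(1) by (meson inj_onD)
  obtain es0 w0 where "fpath E b es0 w0" "w = h w0" "es = map (hh h) es0"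
    using Cons.IH[OF \<open>b \<in> VT\<close> abc(4)] by blast
  then show ?case using abc \<open>a = u\<close> by (intro exI[of _ "(a, c, b) # es0"] exI[of _ w0]) simp
qed

lemma tree_transport:
  assumes "is_tree VT ET t0" "inj_on h VT"
  shows "is_tree (h ` VT) (hh h ` ET) (h t0)"
    and "is_morphism VT ET (h ` VT) (hh h ` ET) h"
    and "is_morphism (h ` VT) (hh h ` ET) VT ET (inv_into VT h)"
proof -
  have g: "is_graph VT ET" and t0: "t0 \<in> VT" and u: "\<forall>v\<in>VT. \<exists>!es. fpath ET t0 es v"
    using assms(1) unfolding is_tree_def by auto
  have ginj: "inj_on (hh h) ET"
  proof (rule inj_onI)
    fix e e' assume ee: "e \<in> ET" "e' \<in> ET" "hh h e = hh h e'"
    obtain a c b a' c' b' where e: "e = (a, c, b)" "e' = (a', c', b')" by (cases e, cases e') auto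
    have "a \<in> VT" "b \<in> VT" "a' \<in> VT" "b' \<in> VT"
      using graph_edgeD[OF g] ee(1,2) unfolding e by blast+
    then show "e = e'" using ee(3) assms(2) unfolding e hh_def by (auto dest: inj_onD)
  qed
  have "is_graph (h ` VT) (hh h ` ET)"
    unfolding is_graph_def
  proof
    show "hh h ` ET \<subseteq> h ` VT \<times> UNIV \<times> h ` VT"
      using graph_edgeD[OF g] by (auto simp: hh_def)
    show "\<forall>v\<in>h ` VT. \<exists>c v'. (v, c, v') \<in> hh h ` ET"
    proof
      fix v' assume "v' \<in> h ` VT"
      then obtain v where v: "v \<in> VT" "v' = h v" by blast
      obtain c b where "(v, c, b) \<in> ET" using graph_succ[OF g v(1)] by blast
      then have "(v', c, h b) \<in> hh h ` ET" using v(2) by (force simp: hh_def)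
      then show "\<exists>c x. (v', c, x) \<in> hh h ` ET" by blast
    qed
  qed
  then show "is_tree (h ` VT) (hh h ` ET) (h t0)"
    unfolding is_tree_def
  proof (intro conjI ballI)
    show "h t0 \<in> h ` VT" using t0 by blast
    fix v' assume "v' \<in> h ` VT"
    then obtain v where v: "v \<in> VT" "v' = h v" by blast
    then obtain es where es: "fpath ET t0 es v" using u by blast
    show "\<exists>!es. fpath (hh h ` ET) (h t0) es v'"
    proof (rule ex1I[of _ "map (hh h) es"])
      show "fpath (hh h ` ET) (h t0) (map (hh h) es) v'" using fpath_map[OF es] v(2) by simp
      fix es' assume es': "fpath (hh h ` ET) (h t0) es' v'"
      obtain es0 w0 where e0: "fpath ET t0 es0 w0" "v' = h w0" "es' = map (hh h) es0"
        using fpath_unmap[OF assms(2) g t0] es' by blast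
      have "w0 \<in> VT" using fpath_in_V[OF g t0 e0(1)] .
      then have "w0 = v" using e0(2) v assms(2) by (meson inj_onD)
      then have "es0 = es" using tree_unique[OF assms(1) e0(1)] es by simp
      then show "es' = map (hh h) es" using e0(3) by simp
    qed
  qed
  show "is_morphism VT ET (h ` VT) (hh h ` ET) h"
    unfolding is_morphism_def by (force simp: hh_def)
  show "is_morphism (h ` VT) (hh h ` ET) VT ET (inv_into VT h)"
    unfolding is_morphism_def
  proof (intro conjI allI impI ballI)
    fix v' assume "v' \<in> h ` VT"
    then show "inv_into VT h v' \<in> VT" by (rule inv_into_into)
  next
    fix a' c b' assume "(a', c, b') \<in> hh h ` ET"
    then obtain a b where ab: "(a, c, b) \<in> ET" "a' = h a" "b' = h b" by (force simp: hh_def)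
    have "a \<in> VT" "b \<in> VT" using graph_edgeD[OF g ab(1)] by auto
    then have "inv_into VT h a' = a" "inv_into VT h b' = b" using ab assms(2) by (simp_all add: inv_into_f_f)
    then show "(inv_into VT h a', c, inv_into VT h b') \<in> ET" using ab(1) by simp
  qed
qed

section \<open>Infinite concatenation of finite paths\<close>

definition CL :: "(nat \<Rightarrow> 'e list) \<Rightarrow> nat \<Rightarrow> 'e list" where
  "CL seg n = concat (map seg [0..<n])"

lemma CL_Suc: "CL seg (Suc n) = CL seg n @ seg n" by (simp add: CL_def)
lemma CL_0: "CL seg 0 = []" by (simp add: CL_def)

lemma length_CL: "length (CL seg n) = (\<Sum>i<n. length (seg i))"
  by (induction n) (simp_all add: CL_0 CL_Suc)

lemma CL_prefix: "m \<le> m' \<Longrightarrow> \<exists>r. CL seg m' = CL seg m @ r"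
proof (induction m' rule: dec_induct)
  case base then show ?case by simp
next
  case (step m') then show ?case by (auto simp: CL_Suc)
qed

lemma CL_nth_eq:
  assumes "i < length (CL seg m)" "i < length (CL seg m')"
  shows "CL seg m ! i = CL seg m' ! i"
proof -
  have "\<exists>r. CL seg (max m m') = CL seg m @ r" "\<exists>r. CL seg (max m m') = CL seg m' @ r"
    by (auto intro: CL_prefix)
  then show ?thesis using assms by (metis nth_append)
qed

lemma CL_length_ge:
  assumes "\<forall>n. seg n \<noteq> []"
  shows "n \<le> length (CL seg n)"
proof (induction n)
  case 0 then show ?case by simp
next
  case (Suc n)
  have "seg n \<noteq> []" using assms by blast
  then have a: "0 < length (seg n)" by simp
  have "length (CL seg (Suc n)) = length (CL seg n) + length (seg n)" by (simp add: CL_Suc)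
  then show ?case using Suc a by linarith
qed

lemma CL_fpath:
  assumes "\<forall>n. fpath E (a n) (seg n) (a (Suc n))"
  shows "fpath E (a 0) (CL seg n) (a n)"
proof (induction n)
  case 0 then show ?case by (simp add: CL_0)
next
  case (Suc n) then show ?case using assms by (auto simp: CL_Suc fpath_append)
qed

lemma CL_cover:
  assumes "\<forall>n. seg n \<noteq> []"
  shows "\<exists>n j. i = length (CL seg n) + j \<and> j < length (seg n)"
proof -
  have ex: "\<exists>n. i < length (CL seg (Suc n))" using CL_length_ge[OF assms, of "Suc i"] by (intro exI[of _ i]) simp
  define n where "n = (LEAST n. i < length (CL seg (Suc n)))"
  have n1: "i < length (CL seg (Suc n))" unfolding n_def by (rule LeastI_ex[OF ex])
  have n2: "length (CL seg n) \<le> i"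
  proof (cases n)
    case 0 then show ?thesis by (simp add: CL_0)
  next
    case (Suc k)
    have "\<not> i < length (CL seg (Suc k))"
    proof
      assume "i < length (CL seg (Suc k))"
      then have "n \<le> k" unfolding n_def by (rule Least_le)
      then show False using Suc by simp
    qed
    then show ?thesis using Suc by simp
  qed
  show ?thesis
    using n1 n2 by (intro exI[of _ n] exI[of _ "i - length (CL seg n)"]) (simp add: CL_Suc)
qed

lemma concat_inf_path:
  assumes segs: "\<forall>n. fpath E (a n) (seg n) (a (Suc n))" and ne: "\<forall>n. seg n \<noteq> []"
  shows "\<exists>p w. p 0 = a 0 \<and> (\<forall>i. (p i, w i, p (Suc i)) \<in> E) \<and>
     (\<forall>n j. j < length (seg n) \<longrightarrow> w (length (CL seg n) + j) = fst (snd (seg n ! j)))"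
proof -
  define ed where "ed j = CL seg (Suc j) ! j" for j
  have lenS: "j < length (CL seg (Suc j))" for j using CL_length_ge[OF ne, of "Suc j"] by simp
  have edm: "CL seg m ! j = ed j" if "j < length (CL seg m)" for m j
    unfolding ed_def using CL_nth_eq[OF that lenS] .
  define p where "p j = fst (ed j)" for j
  define w where "w j = fst (snd (ed j))" for j
  have p0: "p 0 = a 0"
  proof -
    have "0 < length (CL seg 1)" using lenS[of 0] by simp
    then have "fst (CL seg 1 ! 0) = a 0" using fpath_nth_fst[OF CL_fpath[OF segs, of 1]] by simp
    then show ?thesis unfolding p_def using edm[of 0 1] lenS[of 0] by simp
  qed
  have edges: "(p i, w i, p (Suc i)) \<in> E" for i
  proof -
    define m where "m = Suc (Suc i)"
    have l: "Suc i < length (CL seg m)" unfolding m_def using lenS[of "Suc i"] by simp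
    have fp: "fpath E (a 0) (CL seg m) (a m)" by (rule CL_fpath[OF segs])
    have e1: "CL seg m ! i \<in> E" using fpath_nth_in[OF fp] l by simp
    have e2: "fst (CL seg m ! Suc i) = snd (snd (CL seg m ! i))" using fpath_nth_fst[OF fp l] by simp
    have "ed i = CL seg m ! i" "ed (Suc i) = CL seg m ! Suc i" using edm l by auto
    then show ?thesis using e1 e2 unfolding p_def w_def by (cases "CL seg m ! i") auto
  qed
  have words: "w (length (CL seg n) + j) = fst (snd (seg n ! j))" if "j < length (seg n)" for n j
  proof -
    have "length (CL seg n) + j < length (CL seg (Suc n))" using that by (simp add: CL_Suc)
    then have "ed (length (CL seg n) + j) = CL seg (Suc n) ! (length (CL seg n) + j)" using edm by simp
    also have "\<dots> = seg n ! j" by (simp add: CL_Suc nth_append)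
    finally show ?thesis unfolding w_def by simp
  qed
  show ?thesis using p0 edges words by blast
qed

lemma Inf_attained:
  fixes S :: "'x::{complete_linorder, wellorder} set"
  assumes "S \<noteq> {}"
  shows "Inf S \<in> S"
proof -
  obtain x where x: "x \<in> S" using assms by blast
  define y where "y = (LEAST y. y \<in> S)"
  have y: "y \<in> S" unfolding y_def using x by (rule LeastI)
  have "\<forall>z\<in>S. y \<le> z" unfolding y_def by (auto intro: Least_le)
  then have "y \<le> Inf S" by (simp add: le_Inf_iff)
  moreover have "Inf S \<le> y" using y by (rule Inf_lower)
  ultimately show ?thesis using y by simp
qed

lemma INF_attained:
  fixes g :: "'a \<Rightarrow> 'x::{complete_linorder, wellorder}"
  assumes "A \<noteq> {}"
  shows "\<exists>a\<in>A. g a = (INF a\<in>A. g a)"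
  using Inf_attained[of "g ` A"] assms by auto

lemma strict_mono_range_inf:
  fixes f :: "nat \<Rightarrow> nat"
  assumes "strict_mono f"
  shows "infinite (range f)"
proof
  assume "finite (range f)"
  then have "finite (UNIV::nat set)" using finite_imageD strict_mono_imp_inj_on[OF assms] by blast
  then show False by simp
qed

lemma enumerate_eq:
  fixes f :: "nat \<Rightarrow> nat"
  assumes "strict_mono f"
  shows "enumerate (range f) n = f n"
proof (induction n)
  case 0
  have "enumerate (range f) 0 = (LEAST s. s \<in> range f)" by (simp add: enumerate_0)
  also have "\<dots> = f 0"
  proof (rule Least_equality)
    show "f 0 \<in> range f" by simp
    fix y assume "y \<in> range f"
    then obtain k where "y = f k" by blast
    then show "f 0 \<le> y" using assms by (simp add: strict_mono_less_eq)
  qed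
  finally show ?case .
next
  case (Suc n)
  have inf: "infinite (range f)" using strict_mono_range_inf[OF assms] .
  have "enumerate (range f) (Suc n) = (LEAST s. s \<in> range f \<and> enumerate (range f) n < s)"
    by (rule enumerate_Suc''[OF inf])
  also have "\<dots> = f (Suc n)"
  proof (rule Least_equality)
    show "f (Suc n) \<in> range f \<and> enumerate (range f) n < f (Suc n)"
      using Suc assms by (simp add: strict_mono_less)
    fix y assume "y \<in> range f \<and> enumerate (range f) n < y"
    then obtain k where "y = f k" "f n < f k" using Suc by (metis imageE)
    then show "f (Suc n) \<le> y" using assms by (simp add: strict_mono_less strict_mono_less_eq)
  qed
  finally show ?case .
qed

lemma eps_val_inf:
  fixes f :: "nat \<Rightarrow> nat"
  assumes "strict_mono f" "{i. w i \<noteq> None} = range f"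
  shows "eps_val val w = val (\<lambda>n. the (w (f n)))"
proof -
  have inf: "infinite {i. w i \<noteq> None}" using strict_mono_range_inf[OF assms(1)] assms(2) by simp
  show ?thesis unfolding eps_val_def using inf assms(2) enumerate_eq[OF assms(1)] by simp
qed

lemma map_filter_upt:
  "map (\<lambda>i. f (xs ! i)) (filter (\<lambda>i. P (xs ! i)) [0..<length xs]) = map f (filter P xs)"
proof (induction xs rule: rev_induct)
  case Nil then show ?case by simp
next
  case (snoc x xs)
  have "map (\<lambda>i. f ((xs @ [x]) ! i)) (filter (\<lambda>i. P ((xs @ [x]) ! i)) [0..<length xs])
      = map (\<lambda>i. f (xs ! i)) (filter (\<lambda>i. P (xs ! i)) [0..<length xs])"
  proof -
    have "filter (\<lambda>i. P ((xs @ [x]) ! i)) [0..<length xs] = filter (\<lambda>i. P (xs ! i)) [0..<length xs]"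
      by (rule filter_cong) (auto simp: nth_append)
    moreover have "map (\<lambda>i. f ((xs @ [x]) ! i)) (filter (\<lambda>i. P (xs ! i)) [0..<length xs])
        = map (\<lambda>i. f (xs ! i)) (filter (\<lambda>i. P (xs ! i)) [0..<length xs])"
      by (rule map_cong) (auto simp: nth_append)
    ultimately show ?thesis by simp
  qed
  then show ?case using snoc by simp
qed

lemma eps_val_fin:
  "eps_val val (prepend xs (\<lambda>_. None)) = (INF w'. val (prepend (map the (filter (\<lambda>x. x \<noteq> None) xs)) w'))"
proof -
  define W where "W = prepend xs (\<lambda>_. None)"
  have W: "W i = (if i < length xs then xs ! i else None)" for i unfolding W_def prepend_def by simp
  have fin: "finite {i. W i \<noteq> None}"
    by (rule finite_subset[of _ "{..<length xs}"]) (auto simp: W split: if_splits)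
  define N where "N = (LEAST N. \<forall>i\<ge>N. W i = None)"
  have LN: "\<forall>i\<ge>length xs. W i = None" by (simp add: W)
  have NL: "N \<le> length xs" unfolding N_def using LN by (rule Least_le)
  have NN: "\<forall>i\<ge>N. W i = None" unfolding N_def using LN by (rule LeastI)
  have "[0..<length xs] = [0..<N] @ [N..<length xs]" using NL by (metis le_add_diff_inverse upt_add_eq_append zero_le)
  moreover have "filter (\<lambda>i. W i \<noteq> None) [N..<length xs] = []" using NN by (auto simp: filter_empty_conv)
  ultimately have "filter (\<lambda>i. W i \<noteq> None) [0..<length xs] = filter (\<lambda>i. W i \<noteq> None) [0..<N]" by simp
  moreover have "map (the \<circ> W) (filter (\<lambda>i. W i \<noteq> None) [0..<length xs]) = map the (filter (\<lambda>x. x \<noteq> None) xs)"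
  proof -
    have "filter (\<lambda>i. W i \<noteq> None) [0..<length xs] = filter (\<lambda>i. xs ! i \<noteq> None) [0..<length xs]"
      by (rule filter_cong) (auto simp: W)
    moreover have "map (the \<circ> W) (filter (\<lambda>i. xs ! i \<noteq> None) [0..<length xs]) = map (\<lambda>i. the (xs ! i)) (filter (\<lambda>i. xs ! i \<noteq> None) [0..<length xs])"
      by (rule map_cong) (auto simp: W)
    moreover note map_filter_upt[where f=the and P="\<lambda>x. x \<noteq> None" and xs=xs]
    ultimately show ?thesis by (simp only:)
  qed
  ultimately have "map (the \<circ> W) (filter (\<lambda>i. W i \<noteq> None) [0..<N]) = map the (filter (\<lambda>x. x \<noteq> None) xs)"
    by simp
  then show ?thesis using fin unfolding eps_val_def W_def[symmetric] N_def[symmetric] Let_def by simp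
qed

section \<open>Cardinality of lists\<close>

unbundle cardinal_syntax

lemma lists_ordLeq:
  assumes inf: "infinite B" and AB: "|A| \<le>o |B|"
  shows "|lists A| \<le>o |B|"
proof -
  define L where "L n = {xs \<in> lists A. length xs = n}" for n
  have eq: "lists A = (\<Union>n. L n)" unfolding L_def by auto
  obtain b where b: "b \<in> B" using inf by (metis finite.emptyI ex_in_conv)
  have Ln: "|L n| \<le>o |B|" for n
  proof (induction n)
    case 0
    have "L 0 = {[]}" unfolding L_def by auto
    then show ?case
      unfolding card_of_ordLeq[symmetric] using b by (intro exI[of _ "\<lambda>_. b"]) auto
  next
    case (Suc n)
    have "L (Suc n) = (\<lambda>(a, xs). a # xs) ` (A \<times> L n)"
      unfolding L_def by (auto simp: length_Suc_conv image_iff)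
    moreover have "|(\<lambda>(a, xs). a # xs) ` (A \<times> L n)| \<le>o |A \<times> L n|" by (rule card_of_image)
    moreover have "|A \<times> L n| \<le>o |B|"
      using card_of_Times_ordLeq_infinite_Field[of "|B|" A "L n"] inf AB Suc
      by (simp add: card_of_Card_order Field_card_of card_of_card_order_on)
    ultimately show ?case using ordLeq_transitive by metis
  qed
  have "|\<Union>n. L n| \<le>o |B|"
    using card_of_UNION_ordLeq_infinite[OF inf, of UNIV L] Ln inf infinite_iff_card_of_nat by auto
  then show ?thesis using eq by simp
qed




lemma graph_image:
  assumes "is_graph V E"
  shows "is_graph (h ` V) (hh h ` E)"
  unfolding is_graph_def
proof
  show "hh h ` E \<subseteq> h ` V \<times> UNIV \<times> h ` V"
    using graph_edgeD[OF assms] by (auto simp: hh_def)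
  show "\<forall>v\<in>h ` V. \<exists>c v'. (v, c, v') \<in> hh h ` E"
  proof
    fix v' assume "v' \<in> h ` V"
    then obtain v where v: "v \<in> V" "v' = h v" by blast
    obtain c b where "(v, c, b) \<in> E" using graph_succ[OF assms v(1)] by blast
    then have "(v', c, h b) \<in> hh h ` E" using v(2) by (force simp: hh_def)
    then show "\<exists>c x. (v', c, x) \<in> hh h ` E" by blast
  qed
qed

lemma lift_strategy:
  assumes "is_strategy V E VE v0 VS ES \<pi> s0" "\<forall>s. g (h s) = s"
  shows "is_strategy V E VE v0 (h ` VS) (hh h ` ES) (\<pi> \<circ> g) (h s0)"
    and "gval val (hh h ` ES) (h s0) \<le> gval val ES s0"
proof -
  have g: "is_graph VS ES" and m: "is_morphism VS ES V E \<pi>" and s0: "s0 \<in> VS" "\<pi> s0 = v0"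
    and ad: "\<forall>v \<in> V - VE. \<forall>c v'. (v, c, v') \<in> E \<longrightarrow> (\<forall>s\<in>VS. \<pi> s = v \<longrightarrow> (\<exists>s'\<in>VS. \<pi> s' = v' \<and> (s, c, s') \<in> ES))"
    using assms(1) unfolding is_strategy_def by auto
  have mg: "is_morphism (h ` VS) (hh h ` ES) VS ES g"
    unfolding is_morphism_def using assms(2) by (auto simp: hh_def)
  show "is_strategy V E VE v0 (h ` VS) (hh h ` ES) (\<pi> \<circ> g) (h s0)"
    unfolding is_strategy_def
  proof (intro conjI ballI allI impI)
    show "is_graph (h ` VS) (hh h ` ES)" using graph_image[OF g] .
    show "is_morphism (h ` VS) (hh h ` ES) V E (\<pi> \<circ> g)" using morph_comp[OF mg m] .
    show "h s0 \<in> h ` VS" using s0 by blast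
    show "(\<pi> \<circ> g) (h s0) = v0" using s0 assms(2) by simp
    fix v c v' s assume H: "v \<in> V - VE" "(v, c, v') \<in> E" "s \<in> h ` VS" "(\<pi> \<circ> g) s = v"
    then obtain t where t: "t \<in> VS" "s = h t" by blast
    then have "\<pi> t = v" using H(4) assms(2) by simp
    then obtain t' where "t' \<in> VS" "\<pi> t' = v'" "(t, c, t') \<in> ES" using ad H(1,2) t(1) by blast
    then show "\<exists>s'\<in>h ` VS. (\<pi> \<circ> g) s' = v' \<and> (s, c, s') \<in> hh h ` ES"
      using t assms(2) by (intro bexI[of _ "h t'"]) (force simp: hh_def)+
  qed
  have "gval val (hh h ` ES) (h s0) \<le> gval val ES (g (h s0))" using morph_gval[OF mg] .
  then show "gval val (hh h ` ES) (h s0) \<le> gval val ES s0" using assms(2) by simp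
qed

lemma mono_words:
  assumes "is_graph V E" "mono_graph V E r" "(a, b) \<in> r"
  shows "path_words E a \<subseteq> path_words E b"
proof
  fix w assume "w \<in> path_words E a"
  then obtain p where p: "p 0 = a" "\<forall>i. (p i, w i, p (Suc i)) \<in> E" unfolding path_words_def by blast
  have po: "partial_order_on V r" and mono: "\<forall>u v v' u' c. (v, u) \<in> r \<and> (v, c, v') \<in> E \<and> (u', v') \<in> r \<longrightarrow> (u, c, u') \<in> E"
    using assms(2) unfolding mono_graph_def by auto
  have "p (Suc 0) \<in> V" using graph_edgeD(2)[OF assms(1)] p(2) by blast
  then have "(p (Suc 0), p (Suc 0)) \<in> r" using po unfolding partial_order_on_def preorder_on_def refl_on_def by blast
  then have e0: "(b, w 0, p (Suc 0)) \<in> E" using mono assms(3) p by metis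
  define p' where "p' = p(0 := b)"
  have "\<forall>i. (p' i, w i, p' (Suc i)) \<in> E"
  proof
    fix i show "(p' i, w i, p' (Suc i)) \<in> E" using e0 p(2) by (cases i) (auto simp: p'_def)
  qed
  then show "w \<in> path_words E b" by (intro path_wordsI[of p']) (auto simp: p'_def)
qed

lemma part2:
  fixes val :: "(nat \<Rightarrow> 'c) \<Rightarrow> 'x::{complete_linorder, wellorder}"
    and V' :: "'u set" and E' :: "('u \<times> 'c option \<times> 'u) set" and M :: "nat set"
  assumes sep: "eps_separated V' E' M P" and wfo: "wf (eps_order E' - Id)"
    and Mf: "finite M" "card M \<le> m"
    and univ: "universal (eps_val val) (UNIV :: 'k set) V' E'"
    and crd: "card_lt (UNIV :: (('v + 's) \<times> 'c option) list set) (UNIV :: 'k set)"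
  shows "eps_memory_le val m TYPE('v) TYPE('s)"
  unfolding eps_memory_le_def
proof (intro allI impI)
  fix V :: "'v set" and E :: "('v \<times> 'c option \<times> 'v) set" and VE v0
  assume game: "is_game V E VE v0"
  have gG: "is_graph V E" and v0: "v0 \<in> V" using game unfolding is_game_def by auto
  let ?GV = "game_value (eps_val val) V E VE v0 TYPE('s)"
  \<comment> \<open>Step 1: a strategy on 'v + 's with value at most the game value\<close>
  obtain VS' ES' \<pi>' s0' where S': "is_strategy V E VE v0 (VS' :: ('v + 's) set) ES' \<pi>' s0'"
    and S'v: "gval (eps_val val) ES' s0' \<le> ?GV"
  proof -
    define Strats where "Strats = {(VS :: 's set, ES, \<pi>, s0). is_strategy V E VE v0 VS ES \<pi> s0}"
    have GV: "?GV = (INF S \<in> Strats. (case S of (VS, ES, \<pi>, s0) \<Rightarrow> gval (eps_val val) ES s0))"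
      unfolding game_value_def Strats_def by simp
    show ?thesis
    proof (cases "Strats = {}")
      case True
      then have top: "?GV = top" using GV by simp
      have st: "is_strategy V E VE v0 V E id v0"
        unfolding is_strategy_def is_morphism_def using gG v0 by (auto dest: graph_edgeD[OF gG])
      define g :: "'v + 's \<Rightarrow> 'v" where "g x = (case x of Inl v \<Rightarrow> v | Inr _ \<Rightarrow> v0)" for x
      have gi: "\<forall>s. g (Inl s) = s" by (simp add: g_def)
      show ?thesis
        using that[OF lift_strategy(1)[where h=Inl, OF st gi]] top by simp
    next
      case False
      then obtain S where S: "S \<in> Strats" "(case S of (VS, ES, \<pi>, s0) \<Rightarrow> gval (eps_val val) ES s0) = ?GV"
        using INF_attained[OF False, of "\<lambda>S. case S of (VS, ES, \<pi>, s0) \<Rightarrow> gval (eps_val val) ES s0"] GV by metis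
      obtain VS ES \<pi> s0 where Sd: "S = (VS, ES, \<pi>, s0)" by (cases S) auto
      have st: "is_strategy V E VE v0 VS ES \<pi> s0" and vS: "gval (eps_val val) ES s0 = ?GV"
        using S unfolding Sd Strats_def by auto
      define g :: "'v + 's \<Rightarrow> 's" where "g x = (case x of Inr s \<Rightarrow> s | Inl _ \<Rightarrow> s0)" for x
      have gi: "\<forall>s. g (Inr s) = s" by (simp add: g_def)
      show ?thesis
        using that[OF lift_strategy(1)[where h=Inr, OF st gi]] lift_strategy(2)[where h=Inr, OF st gi, of "eps_val val"] vS by simp
    qed
  qed
  have gS': "is_graph VS' ES'" and mS': "is_morphism VS' ES' V E \<pi>'" and s0': "s0' \<in> VS'" "\<pi>' s0' = v0"
    and adS': "\<forall>v \<in> V - VE. \<forall>c v'. (v, c, v') \<in> E \<longrightarrow> (\<forall>s\<in>VS'. \<pi>' s = v \<longrightarrow> (\<exists>s'\<in>VS'. \<pi>' s' = v' \<and> (s, c, s') \<in> ES'))"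
    using S' unfolding is_strategy_def by auto
  define UV where "UV = unfV ES' s0'"
  define UE where "UE = unfE ES' s0'"
  define \<rho> :: "(('v + 's) \<times> 'c option) list \<Rightarrow> 'v" where "\<rho> = \<pi>' \<circ> lastv s0'"
  have uT: "is_tree UV UE []" unfolding UV_def UE_def by (rule unf_tree[OF gS' s0'(1)])
  have uG: "is_graph UV UE" using uT unfolding is_tree_def by simp
  have u0: "[] \<in> UV" using uT unfolding is_tree_def by simp
  have uM: "is_morphism UV UE V E \<rho>" unfolding \<rho>_def UV_def UE_def
    by (rule morph_comp[OF unf_morph[OF gS' s0'(1)] mS'])
  have \<rho>0: "\<rho> [] = v0" using s0' by (simp add: \<rho>_def)
  have uval: "gval (eps_val val) UE [] \<le> gval (eps_val val) ES' s0'"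
    using morph_gval[OF unf_morph[OF gS' s0'(1)], of "eps_val val" "[]"] unfolding UE_def by simp
  have uAd: "\<exists>xs'. (xs, c, xs') \<in> UE \<and> \<rho> xs' = v'"
    if H: "xs \<in> UV" "\<rho> xs \<in> V - VE" "(\<rho> xs, c, v') \<in> E" for xs c v'
  proof -
    have l: "lastv s0' xs \<in> VS'" using unf_morph[OF gS' s0'(1)] H(1) unfolding is_morphism_def UV_def by blast
    have a: "\<pi>' (lastv s0' xs) \<in> V - VE" "(\<pi>' (lastv s0' xs), c, v') \<in> E" using H(2,3) by (simp_all add: \<rho>_def)
    have "\<exists>s'\<in>VS'. \<pi>' s' = v' \<and> (lastv s0' xs, c, s') \<in> ES'"
      using adS'[rule_format, OF a(1) a(2) l refl] .
    then obtain s' where s': "s' \<in> VS'" "\<pi>' s' = v'" "(lastv s0' xs, c, s') \<in> ES'" by blast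
    have "(xs, c, xs @ [(s', c)]) \<in> UE" using H(1) s'(3) unfolding UE_def UV_def unfE_mem unfV_def by auto
    moreover have "\<rho> (xs @ [(s', c)]) = v'" using s'(2) by (simp add: \<rho>_def)
    ultimately show ?thesis by blast
  qed
  \<comment> \<open>Step 3: embed into 'k and use universality\<close>
  have "|UNIV :: (('v + 's) \<times> 'c option) list set| \<le>o |UNIV :: 'k set|"
    using crd unfolding card_lt_def by (rule ordLess_imp_ordLeq)
  then obtain h :: "(('v + 's) \<times> 'c option) list \<Rightarrow> 'k" where h: "inj_on h UNIV"
    unfolding card_of_ordLeq[symmetric] by blast
  have hUV: "inj_on h UV" using h by (rule inj_on_subset) simp
  have kT: "is_tree (h ` UV) (hh h ` UE) (h [])" using tree_transport(1)[OF uT hUV] .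
  have kM: "is_morphism UV UE (h ` UV) (hh h ` UE) h" using tree_transport(2)[OF uT hUV] .
  have kI: "is_morphism (h ` UV) (hh h ` UE) UV UE (inv_into UV h)" using tree_transport(3)[OF uT hUV] .
  have kc: "card_lt (h ` UV) (UNIV :: 'k set)"
  proof -
    have "|h ` UV| \<le>o |UV|" by (rule card_of_image)
    moreover have "|UV| \<le>o |UNIV :: (('v + 's) \<times> 'c option) list set|" by (rule card_of_mono1) simp
    ultimately have "|h ` UV| \<le>o |UNIV :: (('v + 's) \<times> 'c option) list set|" by (rule ordLeq_transitive)
    then show ?thesis using crd unfolding card_lt_def by (rule ordLeq_ordLess_trans)
  qed
  obtain \<phi>k where \<phi>k: "is_morphism (h ` UV) (hh h ` UE) V' E' \<phi>k"
    "gval (eps_val val) E' (\<phi>k (h [])) \<le> gval (eps_val val) (hh h ` UE) (h [])"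
    using univ kT kc unfolding universal_def by blast
  define \<phi> where "\<phi> = \<phi>k \<circ> h"
  have \<phi>M: "is_morphism UV UE V' E' \<phi>" unfolding \<phi>_def by (rule morph_comp[OF kM \<phi>k(1)])
  have \<phi>val: "gval (eps_val val) E' (\<phi> []) \<le> gval (eps_val val) UE []"
  proof -
    have "gval (eps_val val) (hh h ` UE) (h []) \<le> gval (eps_val val) UE (inv_into UV h (h []))"
      by (rule morph_gval[OF kI])
    also have "inv_into UV h (h []) = []" using hUV u0 by (simp add: inv_into_f_f)
    finally show ?thesis using \<phi>k(2) unfolding \<phi>_def by simp
  qed
  have gU: "is_graph V' E'" and monoU: "mono_graph V' E' (eps_order E')"
    and PV: "\<forall>j\<in>M. P j \<subseteq> V'" and PU: "(\<Union>j\<in>M. P j) = V'"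
    and Pd: "\<forall>i\<in>M. \<forall>j\<in>M. i \<noteq> j \<longrightarrow> P i \<inter> P j = {}"
    and Pt: "\<forall>j\<in>M. \<forall>a\<in>P j. \<forall>b\<in>P j. (a, b) \<in> eps_order E' \<or> (b, a) \<in> eps_order E'"
    and Pe: "\<forall>v v'. (v, None, v') \<in> E' \<longrightarrow> (\<exists>j\<in>M. v \<in> P j \<and> v' \<in> P j)"
    using sep unfolding eps_separated_def by auto
  have po: "partial_order_on V' (eps_order E')" using monoU unfolding mono_graph_def by auto
  have orefl: "(x, x) \<in> eps_order E'" if "x \<in> V'" for x
    using po that unfolding partial_order_on_def preorder_on_def refl_on_def by blast
  have mono: "\<And>u v v' u' c. (v, u) \<in> eps_order E' \<Longrightarrow> (v, c, v') \<in> E' \<Longrightarrow> (u', v') \<in> eps_order E' \<Longrightarrow> (u, c, u') \<in> E'"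
    using monoU unfolding mono_graph_def by blast
  define D where "D v j = \<phi> ` {xs \<in> UV. \<rho> xs = v} \<inter> P j" for v j
  have minex: "\<exists>\<mu>. \<mu> \<in> D v j \<and> (\<forall>d\<in>D v j. (\<mu>, d) \<in> eps_order E')"
    if H: "j \<in> M" "D v j \<noteq> {}" for v j
  proof -
    obtain \<mu> where \<mu>: "\<mu> \<in> D v j" "\<forall>d. (d, \<mu>) \<in> eps_order E' - Id \<longrightarrow> d \<notin> D v j"
      using wfE_min[OF wfo, of _ "D v j"] H(2) by blast
    have "\<forall>d\<in>D v j. (\<mu>, d) \<in> eps_order E'"
    proof
      fix d assume d: "d \<in> D v j"
      have "d \<in> P j" "\<mu> \<in> P j" using d \<mu>(1) unfolding D_def by auto
      then have "(\<mu>, d) \<in> eps_order E' \<or> (d, \<mu>) \<in> eps_order E'" using Pt H(1) by blast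
      moreover have "\<mu> \<in> V'" using \<open>\<mu> \<in> P j\<close> PV H(1) by blast
      ultimately show "(\<mu>, d) \<in> eps_order E'" using \<mu>(2) d orefl by blast
    qed
    then show ?thesis using \<mu>(1) by blast
  qed
  define mu where "mu v j = (SOME \<mu>. \<mu> \<in> D v j \<and> (\<forall>d\<in>D v j. (\<mu>, d) \<in> eps_order E'))" for v j
  have mu: "mu v j \<in> D v j \<and> (\<forall>d\<in>D v j. (mu v j, d) \<in> eps_order E')"
    if "j \<in> M" "D v j \<noteq> {}" for v j
    unfolding mu_def using someI_ex[OF minex[OF that]] .
  define VS where "VS = {(v, j). j \<in> M \<and> D v j \<noteq> {}}"
  define ES where "ES = {((v, j), c, (v', j')) | v j c v' j'. (v, j) \<in> VS \<and> (v', j') \<in> VS \<and>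
      (v, c, v') \<in> E \<and> (mu v j, c, mu v' j') \<in> E'}"
  have \<phi>V: "\<phi> xs \<in> V'" if "xs \<in> UV" for xs using \<phi>M that unfolding is_morphism_def by blast
  have inP: "\<exists>j\<in>M. x \<in> P j" if "x \<in> V'" for x using PU that by blast
  have rep: "\<exists>xs. xs \<in> UV \<and> \<rho> xs = v \<and> \<phi> xs = mu v j" if "(v, j) \<in> VS" for v j
  proof -
    have "mu v j \<in> D v j" using mu that unfolding VS_def by blast
    then show ?thesis unfolding D_def by auto
  qed
  have succ: "\<exists>j'. (\<rho> xs', j') \<in> VS \<and> ((v, j), c, (\<rho> xs', j')) \<in> ES"
    if H: "(v, j) \<in> VS" "xs \<in> UV" "\<rho> xs = v" "\<phi> xs = mu v j" "(xs, c, xs') \<in> UE" for v j xs c xs'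
  proof -
    have xs': "xs' \<in> UV" using graph_edgeD(2)[OF uG H(5)] .
    obtain j' where j': "j' \<in> M" "\<phi> xs' \<in> P j'" using inP[OF \<phi>V[OF xs']] by blast
    have "\<phi> xs' \<in> D (\<rho> xs') j'" using xs' j'(2) unfolding D_def by blast
    then have vs': "(\<rho> xs', j') \<in> VS" using j'(1) unfolding VS_def by blast
    have le: "(mu (\<rho> xs') j', \<phi> xs') \<in> eps_order E'"
      using mu[OF j'(1)] \<open>\<phi> xs' \<in> D (\<rho> xs') j'\<close> by blast
    have eU: "(\<phi> xs, c, \<phi> xs') \<in> E'" using \<phi>M H(5) unfolding is_morphism_def by blast
    have "(\<phi> xs, \<phi> xs) \<in> eps_order E'" using orefl \<phi>V H(2) by blast
    then have "(mu v j, c, mu (\<rho> xs') j') \<in> E'" using mono[OF _ eU le] H(4) by simp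
    moreover have "(v, c, \<rho> xs') \<in> E" using uM H(3,5) unfolding is_morphism_def by blast
    ultimately show ?thesis using H(1) vs' unfolding ES_def by blast
  qed
  obtain j0 where j0: "j0 \<in> M" "\<phi> [] \<in> P j0" using inP[OF \<phi>V[OF u0]] by blast
  have Dj0: "\<phi> [] \<in> D v0 j0" using u0 \<rho>0 j0(2) unfolding D_def by blast
  have s0VS: "(v0, j0) \<in> VS" using Dj0 j0(1) unfolding VS_def by blast
  have VSsub: "VS \<subseteq> V \<times> M"
  proof
    fix s assume "s \<in> VS"
    then obtain v j where s: "s = (v, j)" "(v, j) \<in> VS" by (cases s) auto
    then obtain xs where "xs \<in> UV" "\<rho> xs = v" using rep by blast
    then have "v \<in> V" using uM unfolding is_morphism_def by blast
    then show "s \<in> V \<times> M" using s unfolding VS_def by blast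
  qed
  have strat: "is_strategy V E VE v0 VS ES fst (v0, j0)"
    unfolding is_strategy_def
  proof (intro conjI ballI allI impI)
    show "is_graph VS ES"
      unfolding is_graph_def
    proof
      show "ES \<subseteq> VS \<times> UNIV \<times> VS" unfolding ES_def by blast
      show "\<forall>s\<in>VS. \<exists>c s'. (s, c, s') \<in> ES"
      proof
        fix s assume "s \<in> VS"
        then obtain v j where s: "s = (v, j)" "(v, j) \<in> VS" by (cases s) auto
        then obtain xs where xs: "xs \<in> UV" "\<rho> xs = v" "\<phi> xs = mu v j" using rep by blast
        obtain c xs' where "(xs, c, xs') \<in> UE" using graph_succ[OF uG xs(1)] by blast
        then show "\<exists>c s'. (s, c, s') \<in> ES" using succ[OF s(2) xs] s(1) by blast
      qed
    qed
    show "is_morphism VS ES V E fst"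
      unfolding is_morphism_def using VSsub unfolding ES_def by auto
    show "(v0, j0) \<in> VS" by (rule s0VS)
    show "fst (v0, j0) = v0" by simp
    fix v c v' s assume H: "v \<in> V - VE" "(v, c, v') \<in> E" "s \<in> VS" "fst s = v"
    then obtain j where s: "s = (v, j)" "(v, j) \<in> VS" by (cases s) auto
    then obtain xs where xs: "xs \<in> UV" "\<rho> xs = v" "\<phi> xs = mu v j" using rep by blast
    obtain xs' where xs': "(xs, c, xs') \<in> UE" "\<rho> xs' = v'" using uAd[OF xs(1)] H(1,2) xs(2) by blast
    show "\<exists>s'\<in>VS. fst s' = v' \<and> (s, c, s') \<in> ES"
      using succ[OF s(2) xs xs'(1)] xs'(2) s(1) by force
  qed
  have epsc: "\<forall>v mm v' mm'. ((v, mm), None, (v', mm')) \<in> ES \<longrightarrow> mm = mm'"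
  proof (intro allI impI)
    fix v mm v' mm' assume H: "((v, mm), None, (v', mm')) \<in> ES"
    then have vs: "(v, mm) \<in> VS" "(v', mm') \<in> VS" and e: "(mu v mm, None, mu v' mm') \<in> E'"
      unfolding ES_def by auto
    obtain i where i: "i \<in> M" "mu v mm \<in> P i" "mu v' mm' \<in> P i" using Pe e by blast
    have "mu v mm \<in> P mm" "mm \<in> M" using mu vs(1) unfolding VS_def D_def by auto
    then have "mm = i" using Pd i by blast
    have "mu v' mm' \<in> P mm'" "mm' \<in> M" using mu vs(2) unfolding VS_def D_def by auto
    then have "mm' = i" using Pd i by blast
    then show "mm = mm'" using \<open>mm = i\<close> by simp
  qed
  have muM: "is_morphism VS ES V' E' (\<lambda>s. mu (fst s) (snd s))"
    unfolding is_morphism_def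
  proof (intro conjI ballI allI impI)
    fix s assume "s \<in> VS"
    then obtain v j where s: "s = (v, j)" "j \<in> M" "D v j \<noteq> {}" unfolding VS_def by auto
    then have "mu (fst s) (snd s) \<in> D (fst s) (snd s)" using mu[OF s(2,3)] by simp
    then obtain xs where "xs \<in> UV" "mu (fst s) (snd s) = \<phi> xs" unfolding D_def by blast
    then show "mu (fst s) (snd s) \<in> V'" using \<phi>V by simp
  next
    fix s c s' assume "(s, c, s') \<in> ES"
    then show "(mu (fst s) (snd s), c, mu (fst s') (snd s')) \<in> E'" unfolding ES_def by auto
  qed
  have "gval (eps_val val) ES (v0, j0) \<le> gval (eps_val val) E' (mu v0 j0)"
    using morph_gval[OF muM, of "eps_val val" "(v0, j0)"] by simp
  also have "\<dots> \<le> gval (eps_val val) E' (\<phi> [])"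
  proof (rule gval_mono_words, rule mono_words[OF gU monoU])
    show "(mu v0 j0, \<phi> []) \<in> eps_order E'" using mu[OF j0(1)] Dj0 by blast
  qed
  also have "\<dots> \<le> gval (eps_val val) UE []" by (rule \<phi>val)
  also have "\<dots> \<le> gval (eps_val val) ES' s0'" by (rule uval)
  also have "\<dots> \<le> ?GV" by (rule S'v)
  finally have vfin: "gval (eps_val val) ES (v0, j0) \<le> ?GV" .
  have "is_eps_strategy V E VE v0 M VS ES (v0, j0)"
    unfolding is_eps_strategy_def using VSsub strat epsc by blast
  then show "\<exists>(M' :: nat set) VS ES s0. finite M' \<and> card M' \<le> m \<and>
           is_eps_strategy V E VE v0 M' VS ES s0 \<and>
           gval (eps_val val) ES s0 \<le> ?GV"
    using Mf vfin by blast
qed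



lemma V1:
  fixes val :: "(nat \<Rightarrow> 'c) \<Rightarrow> 'x::{complete_linorder, wellorder}"
  assumes gr: "is_graph V' E'" and mo: "mono_graph V' E' (eps_order E')"
    and cs: "\<forall>x\<in>V'. \<exists>c y. (x, Some c, y) \<in> E'" and v: "v \<in> V'"
  shows "gval (eps_val val) E' v \<le> gval val {(a, c, b). (a, Some c, b) \<in> E'} v"
proof (rule gval_le_words)
  let ?o = "eps_order E'"
  let ?EC = "{(a, c, b). (a, Some c, b) \<in> E'}"
  have po: "partial_order_on V' ?o" and mono: "\<And>u v v' u' c. (v, u) \<in> ?o \<Longrightarrow> (v, c, v') \<in> E' \<Longrightarrow> (u', v') \<in> ?o \<Longrightarrow> (u, c, u') \<in> E'"
    using mo unfolding mono_graph_def by blast+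
  have orefl: "(x, x) \<in> ?o" if "x \<in> V'" for x
    using po that unfolding partial_order_on_def preorder_on_def refl_on_def by blast
  have otrans: "(x, z) \<in> ?o" if "(x, y) \<in> ?o" "(y, z) \<in> ?o" for x y z
    using po that unfolding partial_order_on_def preorder_on_def trans_def by blast
  have lift: "(y, Some c, z) \<in> E'" if "(x, y) \<in> ?o" "(x, Some c, z) \<in> E'" for x y z c
  proof -
    have "z \<in> V'" using graph_edgeD(2)[OF gr that(2)] .
    then show ?thesis using mono[OF that(1) that(2) orefl] by blast
  qed
  have gEC: "is_graph V' ?EC"
    unfolding is_graph_def
  proof
    show "?EC \<subseteq> V' \<times> UNIV \<times> V'" using graph_edgeD[OF gr] by blast
    show "\<forall>x\<in>V'. \<exists>c y. (x, c, y) \<in> ?EC" using cs by blast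
  qed
  fix w assume "w \<in> path_words E' v"
  then obtain p where p: "p 0 = v" "\<forall>i. (p i, w i, p (Suc i)) \<in> E'" unfolding path_words_def by blast
  have pV: "p i \<in> V'" for i
  proof (cases i)
    case 0 then show ?thesis using p(1) v by simp
  next
    case (Suc j) then show ?thesis using graph_edgeD(2)[OF gr] p(2) by blast
  qed
  have descent: "(p j, p i) \<in> ?o" if "i \<le> j" "\<forall>l. i \<le> l \<and> l < j \<longrightarrow> w l = None" for i j
    using that
  proof (induction j rule: dec_induct)
    case base then show ?case using orefl pV by blast
  next
    case (step j)
    then have "w j = None" by simp
    then have "(p j, None, p (Suc j)) \<in> E'" using p(2) by metis
    then have "(p (Suc j), p j) \<in> ?o" unfolding eps_order_def by simp
    moreover have "(p j, p i) \<in> ?o" using step by simp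
    ultimately show ?case using otrans by blast
  qed
  show "eps_val val w \<le> gval val ?EC v"
  proof (cases "infinite {i. w i \<noteq> None}")
    case True
    define S where "S = {i. w i \<noteq> None}"
    define k where "k = enumerate S"
    have inf: "infinite S" using True unfolding S_def .
    have kS: "w (k n) \<noteq> None" for n using enumerate_in_set[OF inf] unfolding k_def S_def by blast
    have kmono: "k m < k n" if "m < n" for m n using enumerate_mono[OF that inf] unfolding k_def .
    have notS: "w l = None" if "\<forall>n. k n \<noteq> l" for l
    proof (rule ccontr)
      assume "w l \<noteq> None"
      then have "l \<in> S" unfolding S_def by simp
      then obtain n where "enumerate S n = l" using enumerate_Ex[OF inf] by blast
      then show False using that unfolding k_def by blast
    qed
    define P' where "P' n = (case n of 0 \<Rightarrow> v | Suc n' \<Rightarrow> p (Suc (k n')))" for n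
    have le: "(p (k n), P' n) \<in> ?o" for n
    proof (cases n)
      case 0
      have "\<forall>l. 0 \<le> l \<and> l < k 0 \<longrightarrow> w l = None"
      proof (intro allI impI)
        fix l assume l: "0 \<le> l \<and> l < k 0"
        have "\<forall>n. k n \<noteq> l"
        proof
          fix n show "k n \<noteq> l"
          proof (cases n)
            case 0 then show ?thesis using l by simp
          next
            case (Suc n') then show ?thesis using kmono[of 0 n] l by simp
          qed
        qed
        then show "w l = None" by (rule notS)
      qed
      then show ?thesis using descent[of 0 "k 0"] 0 p(1) unfolding P'_def by simp
    next
      case (Suc n')
      have kk: "Suc (k n') \<le> k (Suc n')" using kmono[of n' "Suc n'"] by simp
      have "\<forall>l. Suc (k n') \<le> l \<and> l < k (Suc n') \<longrightarrow> w l = None"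
      proof (intro allI impI)
        fix l assume l: "Suc (k n') \<le> l \<and> l < k (Suc n')"
        have "\<forall>n. k n \<noteq> l"
        proof
          fix n show "k n \<noteq> l"
          proof (cases "n \<le> n'")
            case True
            then have "k n \<le> k n'" using kmono by (metis le_eq_less_or_eq)
            then show ?thesis using l by simp
          next
            case False
            then have "Suc n' \<le> n" by simp
            then have "k (Suc n') \<le> k n" using kmono by (metis le_eq_less_or_eq)
            then show ?thesis using l by simp
          qed
        qed
        then show "w l = None" by (rule notS)
      qed
      then show ?thesis using descent[OF kk] Suc unfolding P'_def by simp
    qed
    have edges: "(P' n, the (w (k n)), P' (Suc n)) \<in> ?EC" for n
    proof -
      obtain c where c: "w (k n) = Some c" using kS by blast
      then have "(p (k n), Some c, p (Suc (k n))) \<in> E'" using p(2) by metis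
      then have "(P' n, Some c, p (Suc (k n))) \<in> E'" using lift[OF le] by blast
      then show ?thesis using c unfolding P'_def by simp
    qed
    have "(\<lambda>n. the (w (k n))) \<in> path_words ?EC v"
      by (rule path_wordsI[of P']) (use edges in \<open>auto simp: P'_def\<close>)
    then have "val (\<lambda>n. the (w (k n))) \<le> gval val ?EC v" by (rule gval_ge)
    moreover have "eps_val val w = val (\<lambda>n. the (w (k n)))"
      unfolding eps_val_def k_def S_def using True by simp
    ultimately show ?thesis by simp
  next
    case False
    have FP: "\<exists>es x. fpath ?EC v es x \<and> map (fst \<circ> snd) es = map (the \<circ> w) (filter (\<lambda>i. w i \<noteq> None) [0..<j])
             \<and> (p j, x) \<in> ?o \<and> x \<in> V'" for j
    proof (induction j)
      case 0
      show ?case using orefl v p(1) by (intro exI[of _ "[]"] exI[of _ v]) simp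
    next
      case (Suc j)
      then obtain es x where ih: "fpath ?EC v es x" "map (fst \<circ> snd) es = map (the \<circ> w) (filter (\<lambda>i. w i \<noteq> None) [0..<j])"
        "(p j, x) \<in> ?o" "x \<in> V'" by blast
      show ?case
      proof (cases "w j")
        case None
        then have "(p j, None, p (Suc j)) \<in> E'" using p(2) by metis
        then have "(p (Suc j), p j) \<in> ?o" unfolding eps_order_def by simp
        then have "(p (Suc j), x) \<in> ?o" using ih(3) otrans by blast
        have "map (fst \<circ> snd) es = map (the \<circ> w) (filter (\<lambda>i. w i \<noteq> None) [0..<Suc j])"
          using ih(2) None by simp
        then show ?thesis using ih(1,4) \<open>(p (Suc j), x) \<in> ?o\<close> by blast
      next
        case (Some c)
        then have "(p j, Some c, p (Suc j)) \<in> E'" using p(2) by metis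
        then have e: "(x, Some c, p (Suc j)) \<in> E'" using lift[OF ih(3)] by blast
        then have "fpath ?EC v (es @ [(x, c, p (Suc j))]) (p (Suc j))" using ih(1) by (simp add: fpath_snoc)
        moreover have "map (fst \<circ> snd) (es @ [(x, c, p (Suc j))]) = map (the \<circ> w) (filter (\<lambda>i. w i \<noteq> None) [0..<Suc j])"
          using ih(2) Some by simp
        ultimately show ?thesis using orefl pV by blast
      qed
    qed
    define N where "N = (LEAST N. \<forall>i\<ge>N. w i = None)"
    define u where "u = map (the \<circ> w) (filter (\<lambda>i. w i \<noteq> None) [0..<N])"
    have ev: "eps_val val w = (INF w'. val (prepend u w'))"
      unfolding eps_val_def u_def N_def using False by (simp add: Let_def)
    obtain es x where es: "fpath ?EC v es x" "map (fst \<circ> snd) es = u" "x \<in> V'" using FP[of N] unfolding u_def by blast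
    obtain q w'' where q: "q 0 = x" "\<forall>i. (q i, w'' i, q (Suc i)) \<in> ?EC" using graph_inf_path[OF gEC es(3)] by blast
    have "prepend u w'' \<in> path_words ?EC v" using fpath_then_inf[OF es(1) q] es(2) by simp
    then have "val (prepend u w'') \<le> gval val ?EC v" by (rule gval_ge)
    moreover have "eps_val val w \<le> val (prepend u w'')" unfolding ev by (rule INF_lower) simp
    ultimately show ?thesis by simp
  qed
qed



definition cwl :: "('k \<times> 'c option \<times> 'k) list \<Rightarrow> 'c list" where
  "cwl es = map the (filter (\<lambda>x. x \<noteq> None) (map (fst \<circ> snd) es))"

lemma cwl_append [simp]: "cwl (xs @ ys) = cwl xs @ cwl ys" by (simp add: cwl_def)
lemma cwl_Nil [simp]: "cwl [] = []" by (simp add: cwl_def)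

lemma CL_fpath_upto:
  assumes "\<forall>n<N. fpath E (a n) (seg n) (a (Suc n))"
  shows "fpath E (a 0) (CL seg N) (a N)"
  using assms
proof (induction N)
  case 0 then show ?case by (simp add: CL_0)
next
  case (Suc N) then show ?case by (auto simp: CL_Suc fpath_append)
qed

lemma cwl_CL:
  assumes "\<forall>n<J. cwl (seg n) = [w n]"
  shows "cwl (CL seg J) = map w [0..<J]"
  using assms by (induction J) (auto simp: CL_0 CL_Suc)

locale ctree =
  fixes VT :: "'k set" and ET :: "('k \<times> 'c option \<times> 'k) set" and t0 :: 'k
    and val :: "(nat \<Rightarrow> 'c) \<Rightarrow> 'x::{complete_linorder, wellorder}"
  assumes tree: "is_tree VT ET t0"
begin

lemma gT: "is_graph VT ET" and t0V: "t0 \<in> VT" and uniq: "\<forall>v\<in>VT. \<exists>!es. fpath ET t0 es v"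
  using tree unfolding is_tree_def by auto

definition anc :: "'k \<Rightarrow> bool" where
  "anc t \<longleftrightarrow> t \<in> VT \<and> (t = t0 \<or> (\<exists>s c. (s, Some c, t) \<in> ET))"

definition epsr :: "'k \<Rightarrow> 'k \<Rightarrow> bool" where
  "epsr t s \<longleftrightarrow> (\<exists>es. fpath ET t es s \<and> (\<forall>e\<in>set es. fst (snd e) = None))"

definition infeps :: "'k \<Rightarrow> bool" where
  "infeps t \<longleftrightarrow> (\<exists>p. p 0 = t \<and> (\<forall>i. (p i, None, p (Suc i)) \<in> ET))"

definition tpath :: "'k \<Rightarrow> ('k \<times> 'c option \<times> 'k) list" where
  "tpath t = (THE es. fpath ET t0 es t)"

definition cw :: "'k \<Rightarrow> 'c list" where
  "cw t = cwl (tpath t)"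

definition wt :: "'k \<Rightarrow> nat \<Rightarrow> 'c" where
  "wt t = (SOME w'. val (prepend (cw t) w') = (INF w''. val (prepend (cw t) w'')))"

definition EG :: "(('k + 'k \<times> nat) \<times> 'c \<times> ('k + 'k \<times> nat)) set" where
  "EG = {(Inl t, c, Inl t') | t c t'. anc t \<and> (\<exists>s. epsr t s \<and> (s, Some c, t') \<in> ET)}
      \<union> {(Inl t, wt t 0, Inr (t, Suc 0)) | t. anc t \<and> infeps t}
      \<union> {(Inr (t, Suc n), wt t (Suc n), Inr (t, Suc (Suc n))) | t n. anc t \<and> infeps t}"

definition VG :: "('k + 'k \<times> nat) set" where
  "VG = Inl ` {t. anc t} \<union> {Inr (t, Suc n) | t n. anc t \<and> infeps t}"

definition gmap :: "('k \<times> 'c option \<times> 'k) list \<Rightarrow> (('k + 'k \<times> nat) \<times> 'c) list" where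
  "gmap es = map (\<lambda>e. (Inl (snd (snd e)), the (fst (snd e)))) (filter (\<lambda>e. fst (snd e) \<noteq> None) es)"

lemma wt: "val (prepend (cw t) (wt t)) = (INF w''. val (prepend (cw t) w''))"
proof -
  obtain a where "a \<in> (UNIV :: (nat \<Rightarrow> 'c) set)" "val (prepend (cw t) a) = (INF w''. val (prepend (cw t) w''))"
    using INF_attained[of "UNIV :: (nat \<Rightarrow> 'c) set" "\<lambda>w'. val (prepend (cw t) w')"] by blast
  then show ?thesis unfolding wt_def by (metis (mono_tags, lifting) someI)
qed

lemma anc_t0: "anc t0" using t0V unfolding anc_def by simp

lemma epsr_refl: "epsr t t" unfolding epsr_def by (intro exI[of _ "[]"]) simp

lemma epsr_snoc:
  assumes "epsr a s" "(s, None, t) \<in> ET"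
  shows "epsr a t"
proof -
  obtain es where es: "fpath ET a es s" "\<forall>e\<in>set es. fst (snd e) = None" using assms(1) unfolding epsr_def by blast
  have "fpath ET a (es @ [(s, None, t)]) t" using es(1) assms(2) by (simp add: fpath_snoc)
  moreover have "\<forall>e\<in>set (es @ [(s, None, t)]). fst (snd e) = None" using es(2) by simp
  ultimately show ?thesis unfolding epsr_def by blast
qed

lemma tpath: "t \<in> VT \<Longrightarrow> fpath ET t0 (tpath t) t"
  unfolding tpath_def using uniq by (metis theI')

lemma tpath_eq: "fpath ET t0 es t \<Longrightarrow> tpath t = es"
  using tree_unique[OF tree] tpath fpath_in_V[OF gT t0V] by metis

lemma EG_sub: "EG \<subseteq> VG \<times> UNIV \<times> VG"
proof
  fix e assume "e \<in> EG"
  then show "e \<in> VG \<times> UNIV \<times> VG"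
  proof (unfold EG_def, elim UnE CollectE exE conjE)
    fix t c t' s assume H: "e = (Inl t, c, Inl t')" "anc t" "epsr t s" "(s, Some c, t') \<in> ET"
    have "t' \<in> VT" using graph_edgeD(2)[OF gT H(4)] .
    then have "anc t'" using H(4) unfolding anc_def by blast
    then show ?thesis using H(1,2) unfolding VG_def by blast
  qed (auto simp: VG_def)
qed

lemma EG_graph: "is_graph VG EG"
  unfolding is_graph_def
proof (intro conjI EG_sub ballI)
  fix x assume "x \<in> VG"
  then consider (l) t where "x = Inl t" "anc t" | (r) t n where "x = Inr (t, Suc n)" "anc t" "infeps t"
    unfolding VG_def by blast
  then show "\<exists>c v'. (x, c, v') \<in> EG"
  proof cases
    case r then show ?thesis unfolding EG_def by blast
  next
    case l
    have tV: "t \<in> VT" using l(2) unfolding anc_def by simp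
    obtain p w where p: "p 0 = t" "\<forall>i. (p i, w i, p (Suc i)) \<in> ET" using graph_inf_path[OF gT tV] by blast
    show ?thesis
    proof (cases "\<forall>i. w i = None")
      case True
      then have "infeps t" unfolding infeps_def using p by metis
      then show ?thesis using l unfolding EG_def by blast
    next
      case False
      define i where "i = (LEAST i. w i \<noteq> None)"
      have wi: "w i \<noteq> None" unfolding i_def using False by (metis (mono_tags, lifting) LeastI)
      have before: "w k = None" if "k < i" for k using not_less_Least[OF that[unfolded i_def]] by simp
      have "fpath ET t (pathlist p w i) (p i)" using fpath_pathlist[OF p(2)] p(1) by metis
      moreover have "\<forall>e\<in>set (pathlist p w i). fst (snd e) = None" using before by (auto simp: pathlist_def)
      ultimately have "epsr t (p i)" unfolding epsr_def by blast
      moreover obtain c where "w i = Some c" using wi by blast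
      then have "(p i, Some c, p (Suc i)) \<in> ET" using p(2) by metis
      ultimately show ?thesis using l unfolding EG_def by blast
    qed
  qed
qed

lemma GP:
  assumes "fpath ET t0 es t"
  shows "vp EG (Inl t0) (gmap es) \<and> (\<exists>a. lastv (Inl t0) (gmap es) = Inl a \<and> anc a \<and> epsr a t)"
  using assms
proof (induction es arbitrary: t rule: rev_induct)
  case Nil
  then have "t = t0" by simp
  then show ?case using anc_t0 epsr_refl by (simp add: gmap_def)
next
  case (snoc e es)
  obtain t' x where e: "e = (t', x, t)" "fpath ET t0 es t'" "(t', x, t) \<in> ET"
    using snoc.prems by (cases e) (auto simp: fpath_snoc)
  obtain a where ih: "vp EG (Inl t0) (gmap es)" "lastv (Inl t0) (gmap es) = Inl a" "anc a" "epsr a t'"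
    using snoc.IH[OF e(2)] by blast
  show ?case
  proof (cases x)
    case None
    then have "gmap (es @ [e]) = gmap es" using e(1) by (simp add: gmap_def)
    then show ?thesis using ih epsr_snoc[OF ih(4)] e(3) None by auto
  next
    case (Some c)
    then have gm: "gmap (es @ [e]) = gmap es @ [(Inl t, c)]" using e(1) by (simp add: gmap_def)
    have "(Inl a, c, Inl t) \<in> EG" using ih(3,4) e(3) Some unfolding EG_def by blast
    then have "vp EG (Inl t0) (gmap (es @ [e]))" using ih(1,2) gm by (simp add: vp_snoc)
    moreover have "anc t" using e(3) Some graph_edgeD(2)[OF gT e(3)] unfolding anc_def by blast
    ultimately show ?thesis using gm epsr_refl by simp
  qed
qed

lemma in_colour_unique:
  assumes "(x, c, b) \<in> EG" "(x', c', b) \<in> EG"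
  shows "c = c'"
  using assms
proof (unfold EG_def, elim UnE CollectE exE conjE)
  fix t ca t' s t2 cb t2' s2
  assume H: "(x, c, b) = (Inl t, ca, Inl t')" "(s, Some ca, t') \<in> ET"
     "(x', c', b) = (Inl t2, cb, Inl t2')" "(s2, Some cb, t2') \<in> ET"
  then have "t' = t2'" by simp
  then show "c = c'" using tree_in_unique[OF tree H(2)] H by auto
qed auto

lemma seg_of_edge:
  assumes "(Inl a, c, Inl b) \<in> EG"
  shows "\<exists>sg. fpath ET a sg b \<and> sg \<noteq> [] \<and> cwl sg = [c] \<and> (\<forall>k<length sg - 1. fst (snd (sg ! k)) = None)
           \<and> fst (snd (sg ! (length sg - 1))) = Some c"
proof -
  obtain s where s: "epsr a s" "(s, Some c, b) \<in> ET" using assms unfolding EG_def by blast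
  obtain es where es: "fpath ET a es s" "\<forall>e\<in>set es. fst (snd e) = None" using s(1) unfolding epsr_def by blast
  define sg where "sg = es @ [(s, Some c, b)]"
  have "fpath ET a sg b" using es(1) s(2) unfolding sg_def by (simp add: fpath_snoc)
  moreover have "cwl sg = [c]" using es(2) unfolding sg_def cwl_def by (simp add: filter_empty_conv)
  moreover have "\<forall>k<length sg - 1. fst (snd (sg ! k)) = None"
    using es(2) unfolding sg_def by (auto simp: nth_append)
  moreover have "fst (snd (sg ! (length sg - 1))) = Some c" unfolding sg_def by simp
  ultimately show ?thesis unfolding sg_def by blast
qed

lemma EInl:
  assumes "(Inl a, c, y) \<in> EG"
  shows "anc a \<and> ((\<exists>b. y = Inl b) \<or> (y = Inr (a, Suc 0) \<and> c = wt a 0 \<and> infeps a))"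
  using assms unfolding EG_def by blast

lemma EInr:
  assumes "(Inr (t, n), c, y) \<in> EG"
  shows "\<exists>n'. n = Suc n' \<and> y = Inr (t, Suc (Suc n')) \<and> c = wt t (Suc n')"
  using assms unfolding EG_def by blast

lemma L4: "gval val EG (Inl t0) \<le> gval (eps_val val) ET t0"
proof (rule gval_le_words)
  fix w assume "w \<in> path_words EG (Inl t0)"
  then obtain q where q: "q 0 = Inl t0" "\<forall>i. (q i, w i, q (Suc i)) \<in> EG" unfolding path_words_def by blast
  have ex: "\<exists>W \<in> path_words ET t0. val w \<le> eps_val val W"
  proof (cases "\<forall>n. \<exists>a. q n = Inl a")
    case True
    define a where "a n = (SOME a. q n = Inl a)" for n
    have qa: "q n = Inl (a n)" for n unfolding a_def using True by (metis (mono_tags, lifting) someI)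
    have "\<forall>n. \<exists>sg. fpath ET (a n) sg (a (Suc n)) \<and> sg \<noteq> [] \<and> cwl sg = [w n] \<and> (\<forall>k<length sg - 1. fst (snd (sg ! k)) = None)
           \<and> fst (snd (sg ! (length sg - 1))) = Some (w n)"
      using seg_of_edge q(2) qa by metis
    then obtain seg where seg: "\<forall>n. fpath ET (a n) (seg n) (a (Suc n)) \<and> seg n \<noteq> [] \<and> cwl (seg n) = [w n] \<and>
           (\<forall>k<length (seg n) - 1. fst (snd (seg n ! k)) = None) \<and> fst (snd (seg n ! (length (seg n) - 1))) = Some (w n)"
      by metis
    have segs: "\<forall>n. fpath ET (a n) (seg n) (a (Suc n))" and ne: "\<forall>n. seg n \<noteq> []" using seg by auto
    obtain p W where pW: "p 0 = a 0" "\<forall>i. (p i, W i, p (Suc i)) \<in> ET"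
      "\<forall>n j. j < length (seg n) \<longrightarrow> W (length (CL seg n) + j) = fst (snd (seg n ! j))"
      using concat_inf_path[OF segs ne] by blast
    have a0: "a 0 = t0" using qa[of 0] q(1) by simp
    have Wp: "W \<in> path_words ET t0" using pW a0 by (intro path_wordsI[of p]) auto
    define F where "F n = length (CL seg n) + (length (seg n) - 1)" for n
    have lenpos: "0 < length (seg n)" for n using ne by simp
    have Fs: "F n < F (Suc n)" for n
    proof -
      have "length (CL seg (Suc n)) = length (CL seg n) + length (seg n)" by (simp add: CL_Suc)
      then show ?thesis using lenpos[of n] lenpos[of "Suc n"] unfolding F_def by linarith
    qed
    have smF: "strict_mono F" using Fs by (simp add: strict_mono_Suc_iff)
    have WF: "W (F n) = Some (w n)" for n
      using pW(3) lenpos[of n] seg unfolding F_def by simp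
    have rng: "{i. W i \<noteq> None} = range F"
    proof
      show "{i. W i \<noteq> None} \<subseteq> range F"
      proof
        fix i assume i: "i \<in> {i. W i \<noteq> None}"
        obtain n j where nj: "i = length (CL seg n) + j" "j < length (seg n)" using CL_cover[OF ne] by blast
        have "W i = fst (snd (seg n ! j))" using pW(3) nj by simp
        then have "\<not> j < length (seg n) - 1" using seg i by auto
        then have "j = length (seg n) - 1" using nj(2) by simp
        then show "i \<in> range F" using nj(1) unfolding F_def by simp
      qed
      show "range F \<subseteq> {i. W i \<noteq> None}" using WF by auto
    qed
    have "eps_val val W = val (\<lambda>n. the (W (F n)))" by (rule eps_val_inf[OF smF rng])
    also have "(\<lambda>n. the (W (F n))) = w" using WF by simp
    finally have "eps_val val W = val w" .
    then show ?thesis using Wp by (intro bexI[of _ W]) simp_all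
  next
    case False
    then obtain n1 where n1: "\<forall>a. q n1 \<noteq> Inl a" by blast
    define n0 where "n0 = (LEAST n. \<forall>a. q n \<noteq> Inl a)"
    have n0: "\<forall>a. q n0 \<noteq> Inl a" unfolding n0_def using n1 by (rule LeastI)
    have bef: "\<exists>a. q n = Inl a" if "n < n0" for n using not_less_Least[OF that[unfolded n0_def]] by blast
    have n0pos: "n0 \<noteq> 0"
    proof
      assume "n0 = 0"
      then show False using n0 q(1) by metis
    qed
    define J where "J = n0 - 1"
    have n0J: "n0 = Suc J" using n0pos unfolding J_def by simp
    define a where "a n = (SOME a. q n = Inl a)" for n
    have qa: "q n = Inl (a n)" if "n \<le> J" for n
      unfolding a_def using bef[of n] that n0J by (metis (mono_tags, lifting) le_imp_less_Suc someI)
    have eJ: "(Inl (a J), w J, q n0) \<in> EG" using q(2)[rule_format, of J] qa[of J] n0J by simp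
    have "\<not> (\<exists>b. q n0 = Inl b)" using n0 by blast
    then have jump: "q n0 = Inr (a J, Suc 0)" "w J = wt (a J) 0" "infeps (a J)"
      using EInl[OF eJ] by auto
    have tail: "q (n0 + k) = Inr (a J, Suc k) \<and> w (n0 + k) = wt (a J) (Suc k)" for k
    proof (induction k)
      case 0
      have "(Inr (a J, Suc 0), w n0, q (Suc n0)) \<in> EG" using q(2) jump(1) by metis
      from EInr[OF this] show ?case using jump(1) by simp
    next
      case (Suc k)
      have "q (n0 + k) = Inr (a J, Suc k)" using Suc by simp
      then have "(Inr (a J, Suc k), w (n0 + k), q (Suc (n0 + k))) \<in> EG" using q(2) by metis
      then have "q (Suc (n0 + k)) = Inr (a J, Suc (Suc k))" using EInr by blast
      moreover have "(Inr (a J, Suc (Suc k)), w (Suc (n0 + k)), q (Suc (Suc (n0 + k)))) \<in> EG"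
        using q(2) calculation by metis
      then have "w (Suc (n0 + k)) = wt (a J) (Suc (Suc k))" using EInr by blast
      ultimately show ?case by simp
    qed
    have "\<forall>n. \<exists>sg. n < J \<longrightarrow> (fpath ET (a n) sg (a (Suc n)) \<and> cwl sg = [w n])"
    proof
      fix n
      show "\<exists>sg. n < J \<longrightarrow> (fpath ET (a n) sg (a (Suc n)) \<and> cwl sg = [w n])"
      proof (cases "n < J")
        case True
        then have "(Inl (a n), w n, Inl (a (Suc n))) \<in> EG" using q(2) qa[of n] qa[of "Suc n"] by (metis Suc_leI less_imp_le)
        from seg_of_edge[OF this] show ?thesis by blast
      qed simp
    qed
    then obtain seg where seg: "\<forall>n<J. fpath ET (a n) (seg n) (a (Suc n)) \<and> cwl (seg n) = [w n]" by metis
    have a0: "a 0 = t0" using qa[of 0] q(1) by simp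
    have fp: "fpath ET t0 (CL seg J) (a J)" using CL_fpath_upto[of J ET a seg] seg a0 by auto
    obtain p' where p': "p' 0 = a J" "\<forall>i. (p' i, None, p' (Suc i)) \<in> ET" using jump(3) unfolding infeps_def by blast
    define W where "W = prepend (map (fst \<circ> snd) (CL seg J)) (\<lambda>_. None)"
    have Wp: "W \<in> path_words ET t0" unfolding W_def using fpath_then_inf[where w="\<lambda>_. None" and q=p', OF fp p'(1)] p'(2) by simp
    have cwJ: "cw (a J) = map w [0..<J]"
      unfolding cw_def tpath_eq[OF fp] using cwl_CL[of J seg w] seg by simp
    have "eps_val val W = (INF w'. val (prepend (cwl (CL seg J)) w'))"
      unfolding W_def eps_val_fin cwl_def by simp
    also have "\<dots> = (INF w'. val (prepend (cw (a J)) w'))" unfolding cw_def tpath_eq[OF fp] ..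
    also have "\<dots> = val (prepend (cw (a J)) (wt (a J)))" using wt by simp
    also have "prepend (cw (a J)) (wt (a J)) = w"
    proof
      fix n
      show "prepend (cw (a J)) (wt (a J)) n = w n"
      proof (cases "n < J")
        case True then show ?thesis unfolding cwJ prepend_def by simp
      next
        case False
        show ?thesis
        proof (cases "n = J")
          case True then show ?thesis unfolding cwJ prepend_def using jump(2) by simp
        next
          case nJ: False
          have "n0 \<le> n" using False nJ n0J by simp
          define k where "k = n - n0"
          have k: "n = n0 + k" using \<open>n0 \<le> n\<close> unfolding k_def by simp
          then have "n - J = Suc k" using n0J by simp
          then show ?thesis unfolding cwJ prepend_def using tail[of k] k False by simp
        qed
      qed
    qed
    finally have "eps_val val W = val w" .
    then show ?thesis using Wp by (intro bexI[of _ W]) simp_all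
  qed
  then obtain W where "W \<in> path_words ET t0" "val w \<le> eps_val val W" by blast
  then show "val w \<le> gval (eps_val val) ET t0" using gval_ge[of W ET t0 "eps_val val"] by simp
qed

end




lemma vp_set: "vp E u xs \<Longrightarrow> set xs \<subseteq> {(b, c). \<exists>x. (x, c, b) \<in> E}"
  by (induction xs arbitrary: u) auto

lemma part1:
  fixes val :: "(nat \<Rightarrow> 'c) \<Rightarrow> 'x::{complete_linorder, wellorder}"
    and V :: "'g set" and E :: "('g \<times> 'c \<times> 'g) set" and K :: "'k set"
  assumes gU: "is_graph V E" and wm: "well_mono V E r" and univ: "universal val K V E"
    and fm: "\<forall>x\<in>V. f x < m" and fc: "\<forall>x\<in>V. \<forall>y\<in>V. f x = f y \<longrightarrow> (x, y) \<in> r \<or> (y, x) \<in> r"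
  shows "\<exists>(V' :: ('g \<times> nat) set) E' (M :: nat set) P.
           eps_separated V' E' M P \<and> wf (eps_order E' - Id) \<and> finite M \<and> card M \<le> m \<and>
           universal (eps_val val) K V' E'"
proof -
  have po: "partial_order_on V r" and wfr: "wf (r - Id)"
    and mono: "\<And>u v v' u' c. (v, u) \<in> r \<Longrightarrow> (v, c, v') \<in> E \<Longrightarrow> (u', v') \<in> r \<Longrightarrow> (u, c, u') \<in> E"
    using wm unfolding well_mono_def mono_graph_def by blast+
  have rrefl: "(x, x) \<in> r" if "x \<in> V" for x
    using po that unfolding partial_order_on_def preorder_on_def refl_on_def by blast
  have rtrans: "(x, z) \<in> r" if "(x, y) \<in> r" "(y, z) \<in> r" for x y z
    using po that unfolding partial_order_on_def preorder_on_def trans_def by blast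
  have rantisym: "x = y" if "(x, y) \<in> r" "(y, x) \<in> r" for x y
    using po that unfolding partial_order_on_def antisym_def by blast
  define V' :: "('g \<times> nat) set" where "V' = (\<lambda>u. (u, 0)) ` V"
  define E' :: "(('g \<times> nat) \<times> 'c option \<times> ('g \<times> nat)) set" where
    "E' = {((u, 0), Some c, (u', 0)) | u c u'. (u, c, u') \<in> E} \<union>
          {((u, 0), None, (u', 0)) | u u'. u \<in> V \<and> u' \<in> V \<and> (u', u) \<in> r \<and> f u = f u'}"
  define M :: "nat set" where "M = {..<m}"
  define P :: "nat \<Rightarrow> ('g \<times> nat) set" where "P j = {(u, 0) | u. u \<in> V \<and> f u = j}" for j
  have ord: "(x, y) \<in> eps_order E' \<longleftrightarrow> (\<exists>a b. x = (a, 0) \<and> y = (b, 0) \<and> a \<in> V \<and> b \<in> V \<and> (a, b) \<in> r \<and> f a = f b)" for x y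
    unfolding eps_order_def E'_def by auto
  have Eedge: "((a, 0), Some c, (b, 0)) \<in> E' \<longleftrightarrow> (a, c, b) \<in> E" for a b c unfolding E'_def by auto
  have E'Some: "(x, Some c, y) \<in> E' \<longleftrightarrow> (\<exists>a b. x = (a, 0) \<and> y = (b, 0) \<and> (a, c, b) \<in> E)" for x y c
    unfolding E'_def by auto
  have gV': "is_graph V' E'"
    unfolding is_graph_def
  proof
    show "E' \<subseteq> V' \<times> UNIV \<times> V'" unfolding E'_def V'_def using graph_edgeD[OF gU] by blast
    show "\<forall>v\<in>V'. \<exists>c v'. (v, c, v') \<in> E'"
    proof
      fix v assume "v \<in> V'"
      then obtain u where "v = (u, 0)" "u \<in> V" unfolding V'_def by blast
      then have "(v, None, v) \<in> E'" unfolding E'_def using rrefl by blast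
      then show "\<exists>c v'. (v, c, v') \<in> E'" by blast
    qed
  qed
  have po': "partial_order_on V' (eps_order E')"
    unfolding partial_order_on_def preorder_on_def refl_on_def trans_def antisym_def
  proof (intro conjI ballI allI impI)
    show "eps_order E' \<subseteq> V' \<times> V'" unfolding V'_def using ord by auto
  next
    fix x assume "x \<in> V'"
    then show "(x, x) \<in> eps_order E'" unfolding V'_def ord using rrefl by blast
  next
    fix x y z assume "(x, y) \<in> eps_order E'" "(y, z) \<in> eps_order E'"
    then show "(x, z) \<in> eps_order E'" unfolding ord using rtrans by fastforce
  next
    fix x y assume "(x, y) \<in> eps_order E'" "(y, x) \<in> eps_order E'"
    then show "x = y" unfolding ord using rantisym by fastforce
  qed
  have mono': "mono_graph V' E' (eps_order E')"
    unfolding mono_graph_def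
  proof (intro conjI po' allI impI)
    fix u v v' u' c assume H: "(v, u) \<in> eps_order E' \<and> (v, c, v') \<in> E' \<and> (u', v') \<in> eps_order E'"
    obtain a b where ab: "v = (a, 0)" "u = (b, 0)" "a \<in> V" "b \<in> V" "(a, b) \<in> r" "f a = f b" using H ord by blast
    obtain a' b' where ab': "u' = (a', 0)" "v' = (b', 0)" "a' \<in> V" "b' \<in> V" "(a', b') \<in> r" "f a' = f b'" using H ord by blast
    show "(u, c, u') \<in> E'"
    proof (cases c)
      case None
      then have "(b', a) \<in> r" "f a = f b'" using H ab ab' unfolding E'_def by auto
      then have "(a', b) \<in> r" using rtrans ab ab' by blast
      then show ?thesis using None ab ab' \<open>f a = f b'\<close> unfolding E'_def by auto
    next
      case (Some c')
      then have "(a, c', b') \<in> E" using H ab ab' Eedge by simp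
      then have "(b, c', a') \<in> E" using mono ab ab' by blast
      then show ?thesis using Some ab ab' Eedge by simp
    qed
  qed
  have sep: "eps_separated V' E' M P"
    unfolding eps_separated_def
  proof (intro conjI gV' mono' ballI allI impI)
    fix j assume "j \<in> M" then show "P j \<subseteq> V'" unfolding P_def V'_def by blast
  next
    show "(\<Union>j\<in>M. P j) = V'" unfolding P_def V'_def M_def using fm by blast
  next
    fix i j assume "i \<in> M" "j \<in> M" "i \<noteq> j" then show "P i \<inter> P j = {}" unfolding P_def by blast
  next
    fix j a b assume "j \<in> M" "a \<in> P j" "b \<in> P j"
    then obtain x y where "a = (x, 0)" "b = (y, 0)" "x \<in> V" "y \<in> V" "f x = j" "f y = j" unfolding P_def by blast
    then show "(a, b) \<in> eps_order E' \<or> (b, a) \<in> eps_order E'" unfolding ord using fc by metis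
  next
    fix v v' assume "(v, None, v') \<in> E'"
    then obtain u u' where "v = (u, 0)" "v' = (u', 0)" "u \<in> V" "u' \<in> V" "f u = f u'" unfolding E'_def by blast
    then show "\<exists>j\<in>M. v \<in> P j \<and> v' \<in> P j" unfolding M_def P_def using fm by blast
  qed
  have wf': "wf (eps_order E' - Id)"
  proof (rule wf_subset[OF wf_inv_image[OF wfr, of fst]])
    show "eps_order E' - Id \<subseteq> inv_image (r - Id) fst"
    proof (rule subrelI)
      fix x y assume H: "(x, y) \<in> eps_order E' - Id"
      then obtain a b where ab: "x = (a, 0)" "y = (b, 0)" "(a, b) \<in> r" using ord by blast
      then have "a \<noteq> b" using H by auto
      then show "(x, y) \<in> inv_image (r - Id) fst" using ab by simp
    qed
  qed
  have M: "finite M" "card M \<le> m" unfolding M_def by auto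
  have univ': "universal (eps_val val) K V' E'"
    unfolding universal_def
  proof (intro allI impI, elim conjE)
    fix VT :: "'k set" and ET :: "('k \<times> 'c option \<times> 'k) set" and t0
    assume tr: "is_tree VT ET t0" and cVT: "card_lt VT K"
    interpret ct: ctree VT ET t0 val by unfold_locales (rule tr)
    have inl0: "Inl t0 \<in> ct.VG" using ct.anc_t0 unfolding ct.VG_def by blast
    define UV where "UV = unfV ct.EG (Inl t0)"
    define UE where "UE = unfE ct.EG (Inl t0)"
    have uT: "is_tree UV UE []" unfolding UV_def UE_def by (rule unf_tree[OF ct.EG_graph inl0])
    have u0: "[] \<in> UV" using uT unfolding is_tree_def by simp
    have infT: "infinite VT" by (rule tree_infinite[OF tr])
    define A where "A = {(b, c). \<exists>x. (x, c, b) \<in> ct.EG}"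
    define code :: "'k + 'k \<times> nat \<Rightarrow> 'k \<times> nat" where "code x = (case x of Inl t \<Rightarrow> (t, 0) | Inr p \<Rightarrow> p)" for x
    define F :: "('k + 'k \<times> nat) \<times> 'c \<Rightarrow> 'k \<times> nat" where "F = code \<circ> fst"
    have AVG: "fst a \<in> ct.VG" if "a \<in> A" for a using that ct.EG_sub unfolding A_def by auto
    have injF: "inj_on F A"
    proof (rule inj_onI)
      fix a a' assume H: "a \<in> A" "a' \<in> A" "F a = F a'"
      obtain b c b' c' where abc: "a = (b, c)" "a' = (b', c')" by (cases a, cases a') auto
      have "b \<in> ct.VG" "b' \<in> ct.VG" using AVG H(1,2) abc by auto
      then have "b = b'" using H(3) abc unfolding F_def code_def ct.VG_def by (auto split: sum.splits)
      moreover obtain x x' where "(x, c, b) \<in> ct.EG" "(x', c', b') \<in> ct.EG" using H(1,2) abc unfolding A_def by auto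
      ultimately have "c = c'" using ct.in_colour_unique by blast
      then show "a = a'" using abc \<open>b = b'\<close> by simp
    qed
    have FA: "F ` A \<subseteq> VT \<times> (UNIV :: nat set)"
    proof
      fix y assume "y \<in> F ` A"
      then obtain a where "a \<in> A" "y = F a" by blast
      then have "fst a \<in> ct.VG" using AVG by blast
      then show "y \<in> VT \<times> UNIV" using \<open>y = F a\<close> unfolding F_def code_def ct.VG_def ct.anc_def by auto
    qed
    have "UV \<subseteq> lists A"
    proof
      fix xs assume "xs \<in> UV"
      then have "vp ct.EG (Inl t0) xs" unfolding UV_def unfV_def by simp
      from vp_set[OF this] show "xs \<in> lists A" unfolding A_def by (simp add: lists_eq_set)
    qed
    then have "|UV| \<le>o |lists A|" by (rule card_of_mono1)
    moreover have "|lists A| \<le>o |lists (VT \<times> (UNIV :: nat set))|"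
      unfolding card_of_ordLeq[symmetric]
    proof (intro exI[of _ "map F"] conjI)
      show "inj_on (map F) (lists A)" by (rule inj_on_map_lists[OF injF])
      show "map F ` lists A \<subseteq> lists (VT \<times> UNIV)"
      proof
        fix ys assume "ys \<in> map F ` lists A"
        then obtain xs where "xs \<in> lists A" "ys = map F xs" by blast
        then have "set ys \<subseteq> F ` A" by auto
        then have "set ys \<subseteq> VT \<times> UNIV" using FA by blast
        then show "ys \<in> lists (VT \<times> UNIV)" by (simp add: lists_eq_set)
      qed
    qed
    moreover have "|lists (VT \<times> (UNIV :: nat set))| \<le>o |VT|"
    proof (rule lists_ordLeq[OF infT])
      have "|UNIV :: nat set| \<le>o |VT|" using infT infinite_iff_card_of_nat by blast
      then have "|VT \<times> (UNIV :: nat set)| =o |VT|" using card_of_Times_infinite_simps(1)[OF infT, of "UNIV :: nat set"] by simp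
      then show "|VT \<times> (UNIV :: nat set)| \<le>o |VT|" by (rule ordIso_imp_ordLeq)
    qed
    ultimately have "|UV| \<le>o |VT|" using ordLeq_transitive by metis
    then obtain h where h: "inj_on h UV" "h ` UV \<subseteq> VT" unfolding card_of_ordLeq[symmetric] by blast
    have kc: "card_lt (h ` UV) K"
    proof -
      have "|h ` UV| \<le>o |VT|" using h(2) by (rule card_of_mono1)
      then show ?thesis using cVT unfolding card_lt_def by (rule ordLeq_ordLess_trans)
    qed
    have kT: "is_tree (h ` UV) (hh h ` UE) (h [])" using tree_transport(1)[OF uT h(1)] .
    have kM: "is_morphism UV UE (h ` UV) (hh h ` UE) h" using tree_transport(2)[OF uT h(1)] .
    have kI: "is_morphism (h ` UV) (hh h ` UE) UV UE (inv_into UV h)" using tree_transport(3)[OF uT h(1)] .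
    obtain \<psi>k where \<psi>k: "is_morphism (h ` UV) (hh h ` UE) V E \<psi>k"
      "gval val E (\<psi>k (h [])) \<le> gval val (hh h ` UE) (h [])"
      using univ kT kc unfolding universal_def by blast
    define \<psi> where "\<psi> = \<psi>k \<circ> h"
    have \<psi>M: "is_morphism UV UE V E \<psi>" unfolding \<psi>_def by (rule morph_comp[OF kM \<psi>k(1)])
    have \<psi>val: "gval val E (\<psi> []) \<le> gval val UE []"
    proof -
      have "gval val (hh h ` UE) (h []) \<le> gval val UE (inv_into UV h (h []))" by (rule morph_gval[OF kI])
      also have "inv_into UV h (h []) = []" using h(1) u0 by (simp add: inv_into_f_f)
      finally show ?thesis using \<psi>k(2) unfolding \<psi>_def by simp
    qed
    have uval: "gval val UE [] \<le> gval val ct.EG (Inl t0)"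
      using morph_gval[OF unf_morph[OF ct.EG_graph inl0], of val "[]"] unfolding UE_def by simp
    define \<phi> where "\<phi> t = (\<psi> (ct.gmap (ct.tpath t)), 0::nat)" for t
    have gmUV: "ct.gmap (ct.tpath t) \<in> UV" if "t \<in> VT" for t
      using ct.GP[OF ct.tpath[OF that]] unfolding UV_def unfV_def by blast
    have \<phi>M: "is_morphism VT ET V' E' \<phi>"
      unfolding is_morphism_def
    proof (intro conjI ballI allI impI)
      fix t assume "t \<in> VT"
      then have "\<psi> (ct.gmap (ct.tpath t)) \<in> V" using \<psi>M gmUV unfolding is_morphism_def by blast
      then show "\<phi> t \<in> V'" unfolding \<phi>_def V'_def by blast
    next
      fix t x t1 assume e: "(t, x, t1) \<in> ET"
      have tV: "t \<in> VT" "t1 \<in> VT" using graph_edgeD[OF ct.gT e] by auto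
      have "fpath ET t0 (ct.tpath t @ [(t, x, t1)]) t1" using ct.tpath[OF tV(1)] e by (simp add: fpath_snoc)
      then have tp: "ct.tpath t1 = ct.tpath t @ [(t, x, t1)]" by (rule ct.tpath_eq)
      show "(\<phi> t, x, \<phi> t1) \<in> E'"
      proof (cases x)
        case None
        then have "ct.gmap (ct.tpath t1) = ct.gmap (ct.tpath t)" using tp by (simp add: ct.gmap_def)
        moreover have "\<psi> (ct.gmap (ct.tpath t)) \<in> V" using \<psi>M gmUV tV(1) unfolding is_morphism_def by blast
        ultimately show ?thesis using None rrefl unfolding \<phi>_def E'_def by auto
      next
        case (Some c)
        then have gm: "ct.gmap (ct.tpath t1) = ct.gmap (ct.tpath t) @ [(Inl t1, c)]" using tp by (simp add: ct.gmap_def)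
        obtain a where a: "vp ct.EG (Inl t0) (ct.gmap (ct.tpath t))" "lastv (Inl t0) (ct.gmap (ct.tpath t)) = Inl a"
          "ct.anc a" "ct.epsr a t" using ct.GP[OF ct.tpath[OF tV(1)]] by blast
        have "(Inl a, c, Inl t1) \<in> ct.EG" using a(3,4) e Some unfolding ct.EG_def by blast
        then have "(ct.gmap (ct.tpath t), c, ct.gmap (ct.tpath t1)) \<in> UE"
          unfolding UE_def unfE_mem using a(1,2) gm by simp
        then have "(\<psi> (ct.gmap (ct.tpath t)), c, \<psi> (ct.gmap (ct.tpath t1))) \<in> E"
          using \<psi>M unfolding is_morphism_def by blast
        then show ?thesis using Some Eedge unfolding \<phi>_def by simp
      qed
    qed
    have tp0: "ct.tpath t0 = []" using ct.tpath_eq[of "[]" t0] by simp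
    have \<phi>0: "\<phi> t0 = (\<psi> [], 0)" unfolding \<phi>_def tp0 by (simp add: ct.gmap_def)
    have \<psi>0V: "\<psi> [] \<in> V" using \<psi>M u0 unfolding is_morphism_def by blast
    let ?EC = "{(a, c, b). (a, Some c, b) \<in> E'}"
    have cs: "\<forall>x\<in>V'. \<exists>c y. (x, Some c, y) \<in> E'"
    proof
      fix x assume "x \<in> V'"
      then obtain u where u: "x = (u, 0)" "u \<in> V" unfolding V'_def by blast
      then obtain c b where "(u, c, b) \<in> E" using graph_succ[OF gU] by blast
      then show "\<exists>c y. (x, Some c, y) \<in> E'" using u Eedge by blast
    qed
    have fstM: "is_morphism V' ?EC V E fst"
      unfolding is_morphism_def V'_def using E'Some by auto
    have "gval (eps_val val) E' (\<phi> t0) \<le> gval val ?EC (\<phi> t0)"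
      by (rule V1[OF gV' mono' cs]) (use \<phi>0 \<psi>0V V'_def in auto)
    also have "\<dots> \<le> gval val E (fst (\<phi> t0))" by (rule morph_gval[OF fstM])
    also have "fst (\<phi> t0) = \<psi> []" using \<phi>0 by simp
    also have "gval val E (\<psi> []) \<le> gval val UE []" by (rule \<psi>val)
    also have "\<dots> \<le> gval val ct.EG (Inl t0)" by (rule uval)
    also have "\<dots> \<le> gval (eps_val val) ET t0" by (rule ct.L4)
    finally show "\<exists>\<phi>. is_morphism VT ET V' E' \<phi> \<and> gval (eps_val val) E' (\<phi> t0) \<le> gval (eps_val val) ET t0"
      using \<phi>M by blast
  qed
  show ?thesis using sep wf' M univ' by blast
qed


theorem proposition3p5:
  fixes val :: "(nat \<Rightarrow> 'c) \<Rightarrow> 'x::{complete_linorder, wellorder}"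
    and m :: nat
  assumes "\<forall>K :: 'k set. \<exists>(V :: 'g set) (E :: ('g \<times> 'c \<times> 'g) set) r.
             is_graph V E \<and> well_mono V E r \<and> width_le V r m \<and> universal val K V E"
  shows "(\<forall>K :: 'k set. \<exists>(V :: ('g \<times> nat) set) (E :: (('g \<times> nat) \<times> 'c option \<times> ('g \<times> nat)) set)
             (M :: nat set) P.
             eps_separated V E M P \<and> wf (eps_order E - Id) \<and> finite M \<and> card M \<le> m \<and>
             universal (eps_val val) K V E)
         \<and> (card_lt (UNIV :: (('v + 's) \<times> 'c option) list set) (UNIV :: 'k set)
             \<longrightarrow> eps_memory_le val m TYPE('v) TYPE('s))"
proof -
  have A: "\<forall>K :: 'k set. \<exists>(V :: ('g \<times> nat) set) (E :: (('g \<times> nat) \<times> 'c option \<times> ('g \<times> nat)) set)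
             (M :: nat set) P.
             eps_separated V E M P \<and> wf (eps_order E - Id) \<and> finite M \<and> card M \<le> m \<and>
             universal (eps_val val) K V E"
  proof
    fix K :: "'k set"
    obtain V :: "'g set" and E :: "('g \<times> 'c \<times> 'g) set" and r where
      H: "is_graph V E" "well_mono V E r" "width_le V r m" "universal val K V E"
      using assms by blast
    have po: "partial_order_on V r" using H(2) unfolding well_mono_def mono_graph_def by blast
    have "refl_on V r" "trans r" "antisym r"
      using po unfolding partial_order_on_def preorder_on_def by auto
    moreover have "\<forall>A \<subseteq> V. achain r A \<longrightarrow> finite A \<and> card A \<le> m"
      using H(3) unfolding width_le_def achain_def by blast
    ultimately obtain f where f: "\<forall>x\<in>V. f x < m" "\<forall>x\<in>V. \<forall>y\<in>V. f x = f y \<longrightarrow> (x, y) \<in> r \<or> (y, x) \<in> r"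
      using dilworth_inf by metis
    show "\<exists>(V' :: ('g \<times> nat) set) (E' :: (('g \<times> nat) \<times> 'c option \<times> ('g \<times> nat)) set)
             (M :: nat set) P.
             eps_separated V' E' M P \<and> wf (eps_order E' - Id) \<and> finite M \<and> card M \<le> m \<and>
             universal (eps_val val) K V' E'"
      by (rule part1[OF H(1,2,4) f])
  qed
  moreover have "card_lt (UNIV :: (('v + 's) \<times> 'c option) list set) (UNIV :: 'k set)
             \<longrightarrow> eps_memory_le val m TYPE('v) TYPE('s)"
  proof
    assume crd: "card_lt (UNIV :: (('v + 's) \<times> 'c option) list set) (UNIV :: 'k set)"
    obtain V :: "('g \<times> nat) set" and E :: "(('g \<times> nat) \<times> 'c option \<times> ('g \<times> nat)) set" and M :: "nat set" and P
      where H: "eps_separated V E M P" "wf (eps_order E - Id)" "finite M" "card M \<le> m"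
        "universal (eps_val val) (UNIV :: 'k set) V E"
      using A by blast
    show "eps_memory_le val m TYPE('v) TYPE('s)" by (rule part2[OF H crd])
  qed
  ultimately show ?thesis by blast
qed

end
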